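(* Let $F$ be a $\mathrm{DMBPP}(\lambda,\Psi_\eta,\Psi_z,\mathcal{V},\mathcal{H})$, a $\theta\mathrm{DMBPP}(\lambda,\Psi_\eta,\mathcal{V},\Psi_\theta)$, or a $w\mathrm{DMBPP}(\lambda,\Psi_v,\Psi_z,\mathcal{H})$. Assume that $x\in\mathcal{X}$ contains only continuous components and that $\mathcal{X}$ is compact. Assume (each condition applying to those ingredients present in the given version): (i) for every $\epsilon>0$, every continuous map $g:\mathcal{X}\to\Delta_m^0$ and every $j\ge1$, $\Pr\{\sup_{x\in\mathcal{X}}\|h_x(z_j(x))-g(x)\|<\epsilon\}>0$; (ii) for every $\epsilon>0$, every continuous map $g:\mathcal{X}\to[0,1]$ and every $j\ge1$, $\Pr\{\sup_{x\in\mathcal{X}}|v_x(\eta_j(x))-g(x)|<\epsilon\}>0$; (iii) $k$ has full support on $\mathbb{N}$; (iv) $v_j$, $j\ge1$, has full support on $[0,1]$; (v) $\theta_j$, $j\ge1$, has full support on $\Delta_m^0$. Then $\tilde{\mathcal{D}}(\Delta_m)^{\mathcal{X}}$ is contained in the support of $F$ under the $L_\infty$ topology, i.e., every $L_\infty$-neighborhood of every element of $\tilde{\mathcal{D}}(\Delta_m)^{\mathcal{X}}$ has positive probability under the law of $F$.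
   Context: Let $m,p\ge 1$. $\Delta_m=\{y\in[0,1]^m:\sum_{i=1}^m y_i\le 1\}$, $\Delta_m^0=\{y\in\Delta_m: y_i>0\ \forall i\}$. $\mathrm{dir}(y\mid\alpha)$, $\alpha=(\alpha_1,\dots,\alpha_{m+1})$, is the $m$-dimensional Dirichlet density $\frac{\Gamma(\sum_i\alpha_i)}{\prod_i\Gamma(\alpha_i)}\prod_{i=1}^m y_i^{\alpha_i-1}(1-\sum_i y_i)^{\alpha_{m+1}-1}$. For $k\in\mathbb{N}=\{1,2,\dots\}$, $\alpha(k,\mathbf{j})=(j_1,\dots,j_m,k+m-\|\mathbf{j}\|_1)$ and $\lceil k\theta\rceil=(\lceil k\theta_1\rceil,\dots,\lceil k\theta_m\rceil)$. $\mathcal{X}\subseteq\mathbb{R}^p$. $\mathcal{V}=\{v_x\}$, $\mathcal{H}=\{h_x\}$ are sets of known continuous functions (described as bijective) $v_x:\mathbb{R}\to[0,1]$, $h_x:\mathbb{R}^m\to\Delta_m^0$ with $x\mapsto v_x(a)$, $x\mapsto h_x(b)$ continuous for all $a,b$. DMBPP$(\lambda,\Psi_\eta,\Psi_z,\mathcal{V},\mathcal{H})$: $\eta_j$, $j\ge1$, i.i.d. real-valued processes on $\mathcal{X}$ (law indexed by finite-dimensional $\Psi_\eta$); $z_j$, $j\ge1$, i.i.d. $\mathbb{R}^m$-valued processes on $\mathcal{X}$ (law indexed by $\Psi_z$); $k\in\mathbb{N}$ random (law indexed by $\lambda$); $F_x$ has Lebesgue density $f_x(\cdot)=\sum_{j\ge1}w_j(x)\mathrm{dir}(\cdot\mid\alpha(k,\lceil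 k\theta_j(x)\rceil))$, $\theta_j(x)=h_x(z_j(x))$, $w_j(x)=V_j(x)\prod_{l<j}(1-V_l(x))$, $V_j(x)=v_x(\eta_j(x))$. $w\mathrm{DMBPP}(\lambda,\Psi_v,\Psi_z,\mathcal{H})$: weights replaced by $w_j=v_j\prod_{l<j}(1-v_l)$ with $v_j$ i.i.d. $[0,1]$-valued (law indexed by $\Psi_v$). $\theta\mathrm{DMBPP}(\lambda,\Psi_\eta,\mathcal{V},\Psi_\theta)$: atoms replaced by $\theta_j$ i.i.d. $\Delta_m^0$-valued (law indexed by $\Psi_\theta$), independent of $x$. $\mathcal{D}(\Delta_m)$: probability measures on $\Delta_m$ absolutely continuous w.r.t. Lebesgue measure with continuous density. $\tilde{\mathcal{D}}(\Delta_m)^{\mathcal{X}}=\{\{Q_x:x\in\mathcal{X}\}\in\mathcal{D}(\Delta_m)^{\mathcal{X}}: (y,x)\mapsto q_x(y)\text{ is continuous}\}$, $q_x$ the density of $Q_x$. The $L_\infty$ topology on $\mathcal{D}(\Delta_m)^{\mathcal{X}}$ is induced by $\sup_{x\in\mathcal{X}}\sup_{y\in\Delta_m}|q_x(y)-q'_x(y)|$. *)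

theory Defs
  imports "HOL-Probability.Probability"
begin

text \<open>Points of R^m are vectors of type real^'m; m = CARD('m).\<close>

definition Dm :: "(real^'m) set" where
  "Dm = {y. (\<forall>i. 0 \<le> y$i \<and> y$i \<le> 1) \<and> (\<Sum>i\<in>UNIV. y$i) \<le> 1}"

definition Dm0 :: "(real^'m) set" where
  "Dm0 = {y \<in> Dm. \<forall>i. 0 < y$i}"

text \<open>m-dimensional Dirichlet density dir(y | a_1..a_m, b), here for positive integer
  parameters (the only ones occurring in the model).\<close>
definition dir_dens :: "nat^'m \<Rightarrow> nat \<Rightarrow> real^'m \<Rightarrow> real" where
  "dir_dens a b y =
     Gamma (real ((\<Sum>i\<in>UNIV. a$i) + b)) / ((\<Prod>i\<in>UNIV. Gamma (real (a$i))) * Gamma (real b))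
     * (\<Prod>i\<in>UNIV. (y$i) ^ (a$i - 1)) * (1 - (\<Sum>i\<in>UNIV. y$i)) ^ (b - 1)"

definition ceil_vec :: "nat \<Rightarrow> real^'m \<Rightarrow> nat^'m" where
  "ceil_vec k \<theta> = (\<chi> i. nat \<lceil>real k * \<theta>$i\<rceil>)"

text \<open>dir(y | alpha(k, ceil(k theta))), alpha(k,j) = (j_1,..,j_m, k + m - |j|_1)\<close>
definition bern_dens :: "nat \<Rightarrow> real^'m \<Rightarrow> real^'m \<Rightarrow> real" where
  "bern_dens k \<theta> y =
     dir_dens (ceil_vec k \<theta>) (k + CARD('m) - (\<Sum>i\<in>UNIV. ceil_vec k \<theta> $ i)) y"

text \<open>stick-breaking weights (index j = 0,1,2,... corresponds to j = 1,2,3,...)\<close>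
definition stick :: "(nat \<Rightarrow> real) \<Rightarrow> nat \<Rightarrow> real" where
  "stick V j = V j * (\<Prod>l<j. 1 - V l)"

definition mix_dens :: "nat \<Rightarrow> (nat \<Rightarrow> 'x \<Rightarrow> real) \<Rightarrow> (nat \<Rightarrow> 'x \<Rightarrow> real^'m) \<Rightarrow> 'x \<Rightarrow> real^'m \<Rightarrow> real" where
  "mix_dens k V \<theta> x y = (\<Sum>j. stick (\<lambda>l. V l x) j * bern_dens k (\<theta> j x) y)"

definition Dtilde :: "'x::topological_space set \<Rightarrow> ('x \<Rightarrow> real^'m \<Rightarrow> real) set" where
  "Dtilde X = {q. (\<forall>x\<in>X. (\<forall>y\<in>Dm. 0 \<le> q x y) \<and> (q x has_integral 1) Dm)
                 \<and> continuous_on (Dm \<times> X) (\<lambda>(y,x). q x y)}"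

definition Linf_dist :: "'x set \<Rightarrow> ('x \<Rightarrow> real^'m \<Rightarrow> real) \<Rightarrow> ('x \<Rightarrow> real^'m \<Rightarrow> real) \<Rightarrow> ereal" where
  "Linf_dist X f q = (SUP x\<in>X. SUP y\<in>Dm. ereal \<bar>f x y - q x y\<bar>)"

definition pos_prob_in :: "'a measure \<Rightarrow> 'a set set \<Rightarrow> 'a set \<Rightarrow> bool" where
  "pos_prob_in M F E \<longleftrightarrow> (\<exists>A\<in>F. A \<subseteq> E \<and> measure M A > 0)"

definition in_Linf_support :: "'a measure \<Rightarrow> 'x set \<Rightarrow> ('a \<Rightarrow> 'x \<Rightarrow> real^'m \<Rightarrow> real)
    \<Rightarrow> ('x \<Rightarrow> real^'m \<Rightarrow> real) \<Rightarrow> bool" where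
  "in_Linf_support M X F q \<longleftrightarrow>
     (\<forall>\<epsilon>>0. pos_prob_in M (sets M) {\<omega>\<in>space M. Linf_dist X (F \<omega>) q < ereal \<epsilon>})"

definition proc_sigma :: "'a measure \<Rightarrow> 'x set \<Rightarrow> ('a \<Rightarrow> 'x \<Rightarrow> 'b::topological_space) \<Rightarrow> 'a set set" where
  "proc_sigma M X \<xi> = sets (vimage_algebra (space M) (\<lambda>\<omega>. restrict (\<xi> \<omega>) X) (PiM X (\<lambda>_. borel)))"

definition rv_sigma :: "'a measure \<Rightarrow> ('a \<Rightarrow> 'b::topological_space) \<Rightarrow> 'a set set" where
  "rv_sigma M \<xi> = sets (vimage_algebra (space M) \<xi> borel)"

definition nat_sigma :: "'a measure \<Rightarrow> ('a \<Rightarrow> nat) \<Rightarrow> 'a set set" where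
  "nat_sigma M k = sets (vimage_algebra (space M) k (count_space UNIV))"

definition iid_procs :: "'a measure \<Rightarrow> 'x set \<Rightarrow> (nat \<Rightarrow> 'a \<Rightarrow> 'x \<Rightarrow> 'b::topological_space) \<Rightarrow> bool" where
  "iid_procs M X \<xi> \<longleftrightarrow>
     (\<forall>j. (\<lambda>\<omega>. restrict (\<xi> j \<omega>) X) \<in> measurable M (PiM X (\<lambda>_. borel))) \<and>
     (\<forall>j. distr M (PiM X (\<lambda>_. borel)) (\<lambda>\<omega>. restrict (\<xi> j \<omega>) X)
          = distr M (PiM X (\<lambda>_. borel)) (\<lambda>\<omega>. restrict (\<xi> 0 \<omega>) X))"

definition iid_rvs :: "'a measure \<Rightarrow> 'b::topological_space set \<Rightarrow> (nat \<Rightarrow> 'a \<Rightarrow> 'b) \<Rightarrow> bool" where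
  "iid_rvs M S \<xi> \<longleftrightarrow>
     (\<forall>j. \<xi> j \<in> borel_measurable M) \<and> (\<forall>j. \<forall>\<omega>\<in>space M. \<xi> j \<omega> \<in> S) \<and>
     (\<forall>j. distr M borel (\<xi> j) = distr M borel (\<xi> 0))"

definition nat_rv :: "'a measure \<Rightarrow> ('a \<Rightarrow> nat) \<Rightarrow> bool" where
  "nat_rv M k \<longleftrightarrow> k \<in> measurable M (count_space UNIV) \<and> (\<forall>\<omega>\<in>space M. 1 \<le> k \<omega>)"

datatype idx = IK | IW nat | IA nat

definition indep_ingredients :: "'a measure \<Rightarrow> 'a set set \<Rightarrow> (nat \<Rightarrow> 'a set set) \<Rightarrow> (nat \<Rightarrow> 'a set set) \<Rightarrow> bool" where
  "indep_ingredients M Fk Fw Fa \<longleftrightarrow>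
     prob_space.indep_sets M (\<lambda>i. case i of IK \<Rightarrow> Fk | IW j \<Rightarrow> Fw j | IA j \<Rightarrow> Fa j) UNIV"

definition V_family :: "'x::topological_space set \<Rightarrow> ('x \<Rightarrow> real \<Rightarrow> real) \<Rightarrow> bool" where
  "V_family X v \<longleftrightarrow> (\<forall>x. continuous_on UNIV (v x) \<and> inj (v x) \<and> range (v x) \<subseteq> {0..1}) \<and>
                     (\<forall>a. continuous_on X (\<lambda>x. v x a))"

definition H_family :: "'x::topological_space set \<Rightarrow> ('x \<Rightarrow> real^'m \<Rightarrow> real^'m) \<Rightarrow> bool" where
  "H_family X h \<longleftrightarrow> (\<forall>x. continuous_on UNIV (h x) \<and> inj (h x) \<and> range (h x) \<subseteq> Dm0) \<and>
                     (\<forall>b. continuous_on X (\<lambda>x. h x b))"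

definition cond_i :: "'a measure \<Rightarrow> 'x::topological_space set \<Rightarrow> (nat \<Rightarrow> 'a \<Rightarrow> 'x \<Rightarrow> real^'m)
    \<Rightarrow> ('x \<Rightarrow> real^'m \<Rightarrow> real^'m) \<Rightarrow> bool" where
  "cond_i M X z h \<longleftrightarrow> (\<forall>\<epsilon>>0. \<forall>g. continuous_on X g \<and> g ` X \<subseteq> Dm0 \<longrightarrow> (\<forall>j.
      pos_prob_in M (proc_sigma M X (z j))
        {\<omega>\<in>space M. (SUP x\<in>X. ereal (norm (h x (z j \<omega> x) - g x))) < ereal \<epsilon>}))"

definition cond_ii :: "'a measure \<Rightarrow> 'x::topological_space set \<Rightarrow> (nat \<Rightarrow> 'a \<Rightarrow> 'x \<Rightarrow> real)
    \<Rightarrow> ('x \<Rightarrow> real \<Rightarrow> real) \<Rightarrow> bool" where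
  "cond_ii M X \<eta> v \<longleftrightarrow> (\<forall>\<epsilon>>0. \<forall>g. continuous_on X g \<and> g ` X \<subseteq> {0..1} \<longrightarrow> (\<forall>j.
      pos_prob_in M (proc_sigma M X (\<eta> j))
        {\<omega>\<in>space M. (SUP x\<in>X. ereal \<bar>v x (\<eta> j \<omega> x) - g x\<bar>) < ereal \<epsilon>}))"

definition cond_iii :: "'a measure \<Rightarrow> ('a \<Rightarrow> nat) \<Rightarrow> bool" where
  "cond_iii M k \<longleftrightarrow> (\<forall>n\<ge>1. measure M {\<omega>\<in>space M. k \<omega> = n} > 0)"

definition full_support :: "'a measure \<Rightarrow> 'b::topological_space set \<Rightarrow> ('a \<Rightarrow> 'b) \<Rightarrow> bool" where
  "full_support M S \<xi> \<longleftrightarrow> (\<forall>U. open U \<and> U \<inter> S \<noteq> {} \<longrightarrow> measure M {\<omega>\<in>space M. \<xi> \<omega> \<in> U} > 0)"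

end

theory Submission
  imports Defs "HOL-Analysis.Analysis"
begin


lemma finite_bounded_nat_vec: "finite {a::nat^'m. \<forall>i. a$i \<le> n}"
proof -
  have "{a::nat^'m. \<forall>i. a$i \<le> n} \<subseteq> vec_lambda ` (PiE UNIV (\<lambda>_. {..n}))"
  proof
    fix a :: "nat^'m" assume "a \<in> {a. \<forall>i. a$i \<le> n}"
    then have "vec_nth a \<in> PiE UNIV (\<lambda>_. {..n})" by auto
    moreover have "a = vec_lambda (vec_nth a)" by simp
    ultimately show "a \<in> vec_lambda ` (PiE UNIV (\<lambda>_. {..n}))" by blast
  qed
  moreover have "finite (vec_lambda ` (PiE UNIV (\<lambda>_::'m. {..n})))"
    by (intro finite_imageI finite_PiE) auto
  ultimately show ?thesis by (rule finite_subset)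
qed

definition grid :: "'m set \<Rightarrow> nat \<Rightarrow> (nat^'m) set" where
  "grid A n = {a. (\<forall>i. i \<notin> A \<longrightarrow> a$i = 0) \<and> (\<Sum>i\<in>A. a$i) \<le> n}"

lemma finite_grid: "finite (grid (A::'m::finite set) n)"
proof -
  have "grid A n \<subseteq> {a::nat^'m. \<forall>i. a$i \<le> n}"
  proof (safe)
    fix a i assume a: "a \<in> grid A n"
    show "a$i \<le> n"
    proof (cases "i \<in> A")
      case True
      then have "a$i \<le> (\<Sum>i\<in>A. a$i)" by (intro member_le_sum) auto
      then show ?thesis using a by (auto simp: grid_def)
    next
      case False then show ?thesis using a by (auto simp: grid_def)
    qed
  qed
  then show ?thesis using finite_bounded_nat_vec finite_subset by blast
qed

definition upd :: "nat^'m \<Rightarrow> 'm \<Rightarrow> nat \<Rightarrow> nat^'m" where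
  "upd a c j = (\<chi> i. if i = c then j else a$i)"

lemma upd_nth[simp]: "upd a c j $ i = (if i = c then j else a$i)"
  by (simp add: upd_def)

lemma sum_grid_insert:
  fixes F :: "nat^'m \<Rightarrow> 'b::comm_monoid_add"
  assumes "c \<notin> A"
  shows "(\<Sum>a\<in>grid (insert c A) n. F a) = (\<Sum>j\<le>n. \<Sum>a\<in>grid A (n-j). F (upd a c j))"
proof -
  have fA: "finite A" by simp
  let ?S = "Sigma {..n} (\<lambda>j. grid A (n-j))"
  have bij: "bij_betw (\<lambda>(j,a). upd a c j) ?S (grid (insert c A) n)"
  proof (rule bij_betwI[where g = "\<lambda>a. (a$c, upd a c 0)"])
    show "(\<lambda>(j,a). upd a c j) \<in> ?S \<rightarrow> grid (insert c A) n"
    proof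
      fix p assume p: "p \<in> ?S"
      obtain j a where pj: "p = (j,a)" by force
      with p have j: "j \<le> n" and a: "a \<in> grid A (n-j)" by auto
      have "(\<Sum>i\<in>insert c A. upd a c j $ i) = j + (\<Sum>i\<in>A. upd a c j $ i)"
        using assms fA by simp
      also have "(\<Sum>i\<in>A. upd a c j $ i) = (\<Sum>i\<in>A. a $ i)"
        using assms by (intro sum.cong) auto
      finally show "(\<lambda>(j,a). upd a c j) p \<in> grid (insert c A) n"
        using a j assms by (auto simp: grid_def pj)
    qed
    show "(\<lambda>a. (a$c, upd a c 0)) \<in> grid (insert c A) n \<rightarrow> ?S"
    proof
      fix a assume a: "a \<in> grid (insert c A) n"
      have s: "(\<Sum>i\<in>insert c A. a $ i) = a$c + (\<Sum>i\<in>A. a $ i)"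
        using assms fA by simp
      have "(\<Sum>i\<in>A. upd a c 0 $ i) = (\<Sum>i\<in>A. a $ i)"
        using assms by (intro sum.cong) auto
      then show "(\<lambda>a. (a$c, upd a c 0)) a \<in> ?S"
        using a s by (auto simp: grid_def)
    qed
    show "(\<lambda>a. (a$c, upd a c 0)) ((\<lambda>(j,a). upd a c j) p) = p" if "p \<in> ?S" for p
    proof -
      obtain j a where pj: "p = (j,a)" by force
      with that have a: "a \<in> grid A (n-j)" by auto
      then have "a$c = 0" using assms by (auto simp: grid_def)
      then have "upd (upd a c j) c 0 = a"
        by (auto simp: vec_eq_iff)
      then show ?thesis by (simp add: pj)
    qed
    show "(\<lambda>(j,a). upd a c j) ((\<lambda>a. (a$c, upd a c 0)) a) = a" for a
      by (auto simp: vec_eq_iff)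
  qed
  have "(\<Sum>a\<in>grid (insert c A) n. F a) = (\<Sum>p\<in>?S. F ((\<lambda>(j,a). upd a c j) p))"
    using sum.reindex_bij_betw[OF bij, of F] by simp
  also have "\<dots> = (\<Sum>j\<le>n. \<Sum>a\<in>grid A (n-j). F (upd a c j))"
    using sum.Sigma[of "{..n}" "\<lambda>j. grid A (n-j)" "\<lambda>j a. F (upd a c j)"]
    by (simp add: finite_grid split_beta)
  finally show ?thesis .
qed

definition coef :: "'m set \<Rightarrow> nat \<Rightarrow> nat^'m \<Rightarrow> real" where
  "coef A n a = fact n / ((\<Prod>i\<in>A. fact (a$i)) * fact (n - (\<Sum>i\<in>A. a$i)))"

definition mterm :: "'m set \<Rightarrow> nat \<Rightarrow> real^'m \<Rightarrow> real \<Rightarrow> nat^'m \<Rightarrow> real" where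
  "mterm A n x t a = coef A n a * (\<Prod>i\<in>A. (x$i)^(a$i)) * t^(n - (\<Sum>i\<in>A. a$i))"


lemma mterm_insert:
  assumes "c \<notin> A" "j \<le> n" "a \<in> grid A (n-j)"
  shows "mterm (insert c A) n x t (upd a c j) = real (n choose j) * (x$c)^j * mterm A (n-j) x t a"
proof -
  have fA: "finite A" by simp
  have s: "(\<Sum>i\<in>A. upd a c j $ i) = (\<Sum>i\<in>A. a $ i)"
    using assms by (intro sum.cong) auto
  have p: "(\<Prod>i\<in>A. fact (upd a c j $ i)) = (\<Prod>i\<in>A. fact (a $ i) :: real)"
    using assms by (intro prod.cong) auto
  have p2: "(\<Prod>i\<in>A. (x$i) ^ (upd a c j $ i)) = (\<Prod>i\<in>A. (x$i) ^ (a $ i))"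
    using assms by (intro prod.cong) auto
  have le: "(\<Sum>i\<in>A. a $ i) \<le> n - j" using assms by (auto simp: grid_def)
  have e: "n - (j + (\<Sum>i\<in>A. a $ i)) = n - j - (\<Sum>i\<in>A. a $ i)" by simp
  have ch: "real (n choose j) = fact n / (fact j * fact (n-j))"
    using assms(2) by (simp add: binomial_fact)
  have S1: "(\<Sum>i\<in>insert c A. upd a c j $ i) = j + (\<Sum>i\<in>A. a $ i)"
    using assms fA s by simp
  have P1: "(\<Prod>i\<in>insert c A. fact (upd a c j $ i)) = fact j * (\<Prod>i\<in>A. fact (a $ i) :: real)"
    using assms fA p by simp
  have P2: "(\<Prod>i\<in>insert c A. (x$i) ^ (upd a c j $ i)) = (x$c)^j * (\<Prod>i\<in>A. (x$i) ^ (a $ i))"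
    using assms fA p2 by simp
  define F where "F = (\<Prod>i\<in>A. fact (a $ i) :: real)"
  define G where "G = (fact (n - j - (\<Sum>i\<in>A. a $ i)) :: real)"
  have Fp: "F > 0" unfolding F_def by (intro prod_pos) auto
  have Gp: "G > 0" unfolding G_def by simp
  have C: "coef (insert c A) n (upd a c j) = real (n choose j) * coef A (n-j) a"
    unfolding coef_def S1 P1 e ch F_def[symmetric] G_def[symmetric]
    using Fp Gp by (simp add: field_simps)
  show ?thesis
    unfolding mterm_def C P2 S1 e by (simp add: ac_simps)
qed

theorem multinomial:
  fixes x :: "real^'m"
  shows "(\<Sum>a\<in>grid A n. mterm A n x t a) = ((\<Sum>i\<in>A. x$i) + t)^n"
proof -
  have "finite A" by simp
  then show ?thesis
  proof (induction A arbitrary: n rule: finite_induct)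
    case empty
    have g: "grid {} n = {0}" by (auto simp: grid_def vec_eq_iff)
    show ?case by (simp add: g mterm_def coef_def)
  next
    case (insert c A)
    have "(\<Sum>a\<in>grid (insert c A) n. mterm (insert c A) n x t a)
        = (\<Sum>j\<le>n. \<Sum>a\<in>grid A (n-j). mterm (insert c A) n x t (upd a c j))"
      by (rule sum_grid_insert) fact
    also have "\<dots> = (\<Sum>j\<le>n. real (n choose j) * (x$c)^j * (\<Sum>a\<in>grid A (n-j). mterm A (n-j) x t a))"
      by (intro sum.cong refl) (simp add: mterm_insert insert.hyps sum_distrib_left)
    also have "\<dots> = (\<Sum>j\<le>n. real (n choose j) * (x$c)^j * ((\<Sum>i\<in>A. x$i) + t)^(n-j))"
      by (simp add: insert.IH)
    also have "\<dots> = (x$c + ((\<Sum>i\<in>A. x$i) + t))^n"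
      by (simp add: binomial_ring)
    finally show ?case using insert.hyps by (simp add: add.assoc)
  qed
qed


lemma sum_grid_marg:
  fixes \<phi> :: "nat \<Rightarrow> real" and y :: "real^'m"
  shows "(\<Sum>a\<in>grid UNIV n. mterm UNIV n y t a * \<phi> (a$i))
       = (\<Sum>j\<le>n. real (n choose j) * (y$i)^j * \<phi> j * ((\<Sum>k\<in>UNIV-{i}. y$k) + t)^(n-j))"
proof -
  have U: "(UNIV::'m set) = insert i (UNIV - {i})" by auto
  have "(\<Sum>a\<in>grid UNIV n. mterm UNIV n y t a * \<phi> (a$i))
      = (\<Sum>a\<in>grid (insert i (UNIV - {i})) n. mterm (insert i (UNIV - {i})) n y t a * \<phi> (a$i))"
    by (simp only: U[symmetric])
  also have "\<dots> = (\<Sum>j\<le>n. \<Sum>a\<in>grid (UNIV-{i}) (n-j). mterm (insert i (UNIV - {i})) n y t (upd a i j) * \<phi> j)"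
    by (subst sum_grid_insert) auto
  also have "\<dots> = (\<Sum>j\<le>n. real (n choose j) * (y$i)^j * \<phi> j * (\<Sum>a\<in>grid (UNIV-{i}) (n-j). mterm (UNIV-{i}) (n-j) y t a))"
  proof (intro sum.cong refl)
    fix j assume j: "j \<in> {..n}"
    have mi: "mterm UNIV n y t (upd a i j) = real (n choose j) * (y$i)^j * mterm (UNIV-{i}) (n-j) y t a"
      if "a \<in> grid (UNIV-{i}) (n-j)" for a
      using mterm_insert[of i "UNIV-{i}" j n a y t] that j U by auto
    show "(\<Sum>a\<in>grid (UNIV-{i}) (n-j). mterm (insert i (UNIV - {i})) n y t (upd a i j) * \<phi> j) =
        real (n choose j) * (y$i)^j * \<phi> j * (\<Sum>a\<in>grid (UNIV-{i}) (n-j). mterm (UNIV-{i}) (n-j) y t a)"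
      by (simp add: U[symmetric] mi sum_distrib_left sum_distrib_right ac_simps cong: sum.cong)
  qed
  also have "\<dots> = (\<Sum>j\<le>n. real (n choose j) * (y$i)^j * \<phi> j * ((\<Sum>k\<in>UNIV-{i}. y$k) + t)^(n-j))"
    by (simp add: multinomial)
  finally show ?thesis .
qed

definition Pm :: "nat \<Rightarrow> real^'m \<Rightarrow> nat^'m \<Rightarrow> real" where
  "Pm n y a = mterm UNIV n y (1 - (\<Sum>i\<in>UNIV. y$i)) a"

lemma Pm_sum: "(\<Sum>a\<in>grid UNIV n. Pm n y a) = 1"
  unfolding Pm_def by (simp add: multinomial)

lemma Pm_marg:
  fixes y :: "real^'m"
  shows "(\<Sum>a\<in>grid UNIV n. Pm n y a * \<phi> (a$i)) = (\<Sum>j\<le>n. Bernstein n j (y$i) * \<phi> j)"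
proof -
  have e: "(\<Sum>k\<in>UNIV-{i}. y$k) + (1 - (\<Sum>i\<in>UNIV. y$i)) = 1 - y$i"
    using sum.remove[of UNIV i "\<lambda>k. y$k"] by simp
  show ?thesis
    unfolding Pm_def sum_grid_marg e
    by (intro sum.cong refl) (simp add: Bernstein_def ac_simps)
qed

lemma Bernstein_var:
  assumes "n \<ge> 1"
  shows "(\<Sum>j\<le>n. Bernstein n j x * (real j / real n - x)^2) = x * (1 - x) / real n"
proof -
  have "(\<Sum>j\<le>n. Bernstein n j x * (real j / real n - x)^2)
     = (\<Sum>j\<le>n. (real j * (real j - 1) * Bernstein n j x) / (real n)^2
          + (real j * Bernstein n j x) * (1 / (real n)^2 - 2 * x / real n) + x^2 * Bernstein n j x)"
    using assms by (intro sum.cong refl) (simp add: field_simps power2_eq_square)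
  also have "\<dots> = real n * (real n - 1) * x^2 / (real n)^2 + real n * x * (1 / (real n)^2 - 2 * x / real n) + x^2"
    by (simp add: sum.distrib sum_divide_distrib[symmetric] sum_distrib_right[symmetric] sum_distrib_left[symmetric])
  also have "\<dots> = x * (1 - x) / real n"
    using assms by (simp add: field_simps power2_eq_square)
  finally show ?thesis .
qed




lemma beta_int:
  fixes t :: real
  assumes "t \<ge> 0"
  shows "((\<lambda>u. u^p * (t-u)^q) has_integral (t^(p+q+1) * fact p * fact q / fact (p+q+1))) {0..t}"
  using assms
proof (induction q arbitrary: p)
  case 0
  have d: "((\<lambda>u. u^(p+1)/real(p+1)) has_vector_derivative x^p) (at x within {0..t})" for x
  proof -
    have "((\<lambda>u. u^(p+1)) has_real_derivative real (p+1) * x^(p+1 - Suc 0)) (at x within {0..t})"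
      by (rule has_field_derivative_at_within[OF DERIV_pow])
    then have "((\<lambda>u. u^(p+1)/real(p+1)) has_real_derivative real (p+1) * x^(p+1 - Suc 0)/real(p+1)) (at x within {0..t})"
      by (rule DERIV_cdivide)
    then show ?thesis by (simp add: has_real_derivative_iff_has_vector_derivative)
  qed
  have "((\<lambda>u. u^p) has_integral (t^(p+1)/(p+1) - 0^(p+1)/(p+1))) {0..t}"
    by (intro fundamental_theorem_of_calculus 0 d)
  moreover have "fact p / fact (p+1) = (1::real) / (p+1)"
    by simp
  ultimately show ?case by simp
next
  case (Suc q)
  have h1: "((\<lambda>u. t * (u^p * (t-u)^q)) has_integral (t * (t^(p+q+1) * fact p * fact q / fact (p+q+1)))) {0..t}"
    by (intro has_integral_mult_right Suc.IH Suc.prems)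
  have h2: "((\<lambda>u. u^(p+1) * (t-u)^q) has_integral (t^(p+1+q+1) * fact (p+1) * fact q / fact (p+1+q+1))) {0..t}"
    by (intro Suc.IH Suc.prems)
  have h: "((\<lambda>u. t * (u^p * (t-u)^q) - u^(p+1) * (t-u)^q) has_integral
     (t * (t^(p+q+1) * fact p * fact q / fact (p+q+1)) - t^(p+1+q+1) * fact (p+1) * fact q / fact (p+1+q+1))) {0..t}"
    by (rule has_integral_diff[OF h1 h2])
  have eq: "t * (u^p * (t-u)^q) - u^(p+1) * (t-u)^q = u^p * (t-u)^Suc q" for u
    by (simp add: algebra_simps)
  define F :: real where "F = fact (p+q+1)"
  have Fp: "F > 0" by (simp add: F_def)
  have f: "fact (p+1+q+1) = (real (p+q+2)) * F" "fact (p + Suc q + 1) = (real (p+q+2)) * F"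
    unfolding F_def by (simp_all add: algebra_simps)
  have f2: "fact (p+1) = real (p+1) * (fact p :: real)" "fact (Suc q) = real (q+1) * (fact q :: real)"
    by simp_all
  have val: "t * (t^(p+q+1) * fact p * fact q / fact (p+q+1)) - t^(p+1+q+1) * fact (p+1) * fact q / fact (p+1+q+1)
     = t^(p + Suc q + 1) * fact p * fact (Suc q) / fact (p + Suc q + 1)"
  proof -
    define T where "T = t^(p+q+2)"
    have T: "t * t^(p+q+1) = T" "t^(p+1+q+1) = T" "t^(p + Suc q + 1) = T"
      unfolding T_def by (simp_all add: algebra_simps)
    define A :: real where "A = fact p"
    define B :: real where "B = fact q"
    have "t * (t^(p+q+1) * A * B / F) - t^(p+1+q+1) * (real (p+1) * A) * B / (real (p+q+2) * F)
        = T * A * B / F - T * (real (p+1) * A) * B / (real (p+q+2) * F)"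
      using T by (simp add: mult.assoc[symmetric])
    also have "\<dots> = T * A * B * real (p+q+2) / (real (p+q+2) * F) - T * (real (p+1) * A) * B / (real (p+q+2) * F)"
      by simp
    also have "\<dots> = (T * A * B * real (p+q+2) - T * (real (p+1) * A) * B) / (real (p+q+2) * F)"
      by (rule diff_divide_distrib[symmetric])
    also have "T * A * B * real (p+q+2) - T * (real (p+1) * A) * B = T * A * (real (q+1) * B)"
      by (simp add: algebra_simps)
    finally show ?thesis unfolding f f2 F_def[symmetric] A_def[symmetric] B_def[symmetric] T .
  qed
  show ?case using h unfolding eq val .
qed


definition dfun :: "'i set \<Rightarrow> ('i \<Rightarrow> nat) \<Rightarrow> nat \<Rightarrow> real \<Rightarrow> ('i \<Rightarrow> real) \<Rightarrow> real" where
  "dfun A a b t x = (if (\<forall>i\<in>A. 0 \<le> x i) \<and> sum x A \<le> t then (\<Prod>i\<in>A. (x i)^(a i)) * (t - sum x A)^b else 0)"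

lemma dfun_nonneg: "dfun A a b t x \<ge> 0"
  unfolding dfun_def by (auto intro!: mult_nonneg_nonneg prod_nonneg zero_le_power)

lemma dfun_meas[measurable]: "finite A \<Longrightarrow> dfun A a b t \<in> borel_measurable (Pi\<^sub>M A (\<lambda>_. lborel))"
  unfolding dfun_def by measurable

lemma dirichlet_PiM:
  fixes A :: "'i set" and a :: "'i \<Rightarrow> nat"
  assumes "finite A" "t \<ge> 0"
  shows "(\<integral>\<^sup>+ x. ennreal (dfun A a b t x) \<partial>Pi\<^sub>M A (\<lambda>_. lborel))
        = ennreal (t^(sum a A + b + card A) * (\<Prod>i\<in>A. fact (a i)) * fact b / fact (sum a A + b + card A))"
  using assms
proof (induction A arbitrary: t b rule: finite_induct)
  case empty
  interpret product_sigma_finite "\<lambda>_. lborel" by standard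
  show ?case using empty by (subst nn_integral_empty) (auto simp: dfun_def)
next
  case (insert c A t b)
  interpret product_sigma_finite "\<lambda>_. lborel" by standard
  define N where "N = sum a A + b + card A"
  define C where "C = (\<Prod>i\<in>A. fact (a i)) * fact b / (fact N :: real)"
  have Cnn: "C \<ge> 0" unfolding C_def by (auto intro!: mult_nonneg_nonneg prod_nonneg divide_nonneg_nonneg)
  have "(\<integral>\<^sup>+ x. ennreal (dfun (insert c A) a b t x) \<partial>Pi\<^sub>M (insert c A) (\<lambda>_. lborel))
      = (\<integral>\<^sup>+ y. \<integral>\<^sup>+ x. ennreal (dfun (insert c A) a b t (x(c := y))) \<partial>Pi\<^sub>M A (\<lambda>_. lborel) \<partial>lborel)"
    using insert.hyps by (subst product_nn_integral_insert_rev) auto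
  also have "\<dots> = (\<integral>\<^sup>+ y. \<integral>\<^sup>+ x. ennreal (indicator {0..t} y * y^(a c)) * ennreal (dfun A a b (t - y) x) \<partial>Pi\<^sub>M A (\<lambda>_. lborel) \<partial>lborel)"
  proof (intro nn_integral_cong)
    fix y :: real and x :: "'i \<Rightarrow> real"
    have s: "(\<Sum>i\<in>A. if i = c then y else x i) = sum x A" using insert.hyps by (intro sum.cong) auto
    have p: "(\<Prod>i\<in>A. (if i = c then y else x i) ^ a i) = (\<Prod>i\<in>A. x i ^ a i)" using insert.hyps by (intro prod.cong) auto
    have q: "(\<forall>i\<in>A. i \<noteq> c \<longrightarrow> 0 \<le> x i) = (\<forall>i\<in>A. 0 \<le> x i)" using insert.hyps by auto
    have sA: "sum x A \<ge> 0" if "\<forall>i\<in>A. 0 \<le> x i" using that by (intro sum_nonneg) auto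
    show "ennreal (dfun (insert c A) a b t (x(c := y))) =
          ennreal (indicator {0..t} y * y^(a c)) * ennreal (dfun A a b (t - y) x)"
      using insert.hyps sA
      by (auto simp: dfun_def s p q indicator_def ennreal_mult'[symmetric] algebra_simps)
  qed
  also have "\<dots> = (\<integral>\<^sup>+ y. ennreal (indicator {0..t} y * y^(a c)) * (\<integral>\<^sup>+ x. ennreal (dfun A a b (t - y) x) \<partial>Pi\<^sub>M A (\<lambda>_. lborel)) \<partial>lborel)"
    using insert.hyps by (intro nn_integral_cong nn_integral_cmult) auto
  also have "\<dots> = (\<integral>\<^sup>+ y. ennreal (y^(a c) * (t-y)^N * C) * indicator {0..t} y \<partial>lborel)"
  proof (intro nn_integral_cong)
    fix y :: real
    show "ennreal (indicator {0..t} y * y^(a c)) * (\<integral>\<^sup>+ x. ennreal (dfun A a b (t - y) x) \<partial>Pi\<^sub>M A (\<lambda>_. lborel))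
        = ennreal (y^(a c) * (t-y)^N * C) * indicator {0..t} y"
    proof (cases "y \<in> {0..t}")
      case True
      then have "t - y \<ge> 0" by auto
      then have "(\<integral>\<^sup>+ x. ennreal (dfun A a b (t - y) x) \<partial>Pi\<^sub>M A (\<lambda>_. lborel)) = ennreal ((t-y)^N * C)"
        by (simp add: insert.IH N_def C_def mult.assoc)
      then show ?thesis using True Cnn
        by (simp add: ennreal_mult'[symmetric] mult.assoc)
    qed simp
  qed
  also have "\<dots> = ennreal (t^(a c + N + 1) * fact (a c) * fact N / fact (a c + N + 1) * C)"
  proof -
    have "((\<lambda>y. y^(a c) * (t-y)^N * C) has_integral (t^(a c + N + 1) * fact (a c) * fact N / fact (a c + N + 1) * C)) {0..t}"
      by (intro has_integral_mult_left beta_int insert.prems)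
    then show ?thesis
      by (intro nn_integral_has_integral_lebesgue') (use Cnn in auto)
  qed
  also have "t^(a c + N + 1) * fact (a c) * fact N / fact (a c + N + 1) * C
      = t^(sum a (insert c A) + b + card (insert c A)) * (\<Prod>i\<in>insert c A. fact (a i)) * fact b / fact (sum a (insert c A) + b + card (insert c A))"
  proof -
    have e: "a c + N + 1 = sum a (insert c A) + b + card (insert c A)"
      using insert.hyps by (simp add: N_def)
    have fN: "(fact N :: real) \<noteq> 0" by simp
    show ?thesis unfolding e[symmetric] C_def using insert.hyps fN
      by (simp add: field_simps)
  qed
  finally show ?case .
qed


lemma vec_Basis: "(Basis :: (real^'m) set) = range (\<lambda>i. axis i 1)"
  by (auto simp: Basis_vec_def)

lemma inj_axis1: "inj (\<lambda>i::'m::finite. axis i (1::real))"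
  by (auto simp: inj_def axis_eq_axis)

lemma sum_Basis_vec: "(\<Sum>v\<in>(Basis :: (real^'m) set). g v) = (\<Sum>i\<in>UNIV. g (axis i 1))"
  unfolding vec_Basis by (subst sum.reindex[OF inj_axis1]) simp

lemma prod_Basis_vec: "(\<Prod>v\<in>(Basis :: (real^'m) set). g v) = (\<Prod>i\<in>UNIV. g (axis i 1))"
  unfolding vec_Basis by (subst prod.reindex[OF inj_axis1]) simp

lemma Phi_nth: "(\<Sum>v\<in>Basis. f v *\<^sub>R v :: real^'m) $ i = f (axis i 1)"
proof -
  have "(\<Sum>v\<in>Basis. f v *\<^sub>R v :: real^'m) $ i = (\<Sum>v\<in>Basis. f v * (v :: real^'m) $ i)"
    by (simp add: sum_component)
  also have "\<dots> = (\<Sum>j\<in>UNIV. f (axis j 1) * (axis j 1 :: real^'m) $ i)"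
    by (rule sum_Basis_vec)
  also have "\<dots> = f (axis i 1)"
    by (simp add: axis_def if_distrib cong: if_cong)
  finally show ?thesis .
qed

definition Fdir :: "nat^'m \<Rightarrow> nat \<Rightarrow> real^'m \<Rightarrow> real" where
  "Fdir a b y = (\<Prod>i\<in>UNIV. (y$i)^(a$i)) * (1 - (\<Sum>i\<in>UNIV. y$i))^b"

lemma Dm_iff: "(y \<in> Dm) = ((\<forall>i. 0 \<le> y$i) \<and> (\<Sum>i\<in>UNIV. y$i) \<le> 1)"
proof -
  have "y$i \<le> 1" if "\<forall>i. 0 \<le> y$i" "(\<Sum>i\<in>UNIV. y$i) \<le> 1" for i
  proof -
    have "y$i \<le> (\<Sum>i\<in>UNIV. y$i)" using that by (intro member_le_sum) auto
    then show ?thesis using that by simp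
  qed
  then show ?thesis unfolding Dm_def by auto
qed

lemma closed_Dm: "closed (Dm :: (real^'m) set)"
proof -
  have "Dm = (\<Inter>i. {y::real^'m. 0 \<le> y$i}) \<inter> {y. (\<Sum>i\<in>UNIV. y$i) \<le> 1}"
    by (auto simp: Dm_iff)
  also have "closed \<dots>"
    by (intro closed_Int closed_INT ballI closed_Collect_le continuous_intros)
  finally show ?thesis .
qed

lemma Dm_borel[measurable]: "(Dm :: (real^'m) set) \<in> sets borel"
  using closed_Dm by (rule borel_closed)

lemma dirichlet_integral:
  fixes a :: "nat^'m"
  shows "(Fdir a b has_integral ((\<Prod>i\<in>UNIV. fact (a$i)) * fact b / fact (sum (vec_nth a) UNIV + b + CARD('m)))) Dm"
proof -
  define r :: real where "r = (\<Prod>i\<in>UNIV. fact (a$i)) * fact b / fact (sum (vec_nth a) UNIV + b + CARD('m))"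
  define \<Phi> :: "(real^'m \<Rightarrow> real) \<Rightarrow> real^'m" where "\<Phi> = (\<lambda>f. \<Sum>v\<in>Basis. f v *\<^sub>R v)"
  define \<alpha> :: "real^'m \<Rightarrow> nat" where "\<alpha> = (\<lambda>v. a $ (inv (\<lambda>i::'m. axis i (1::real)) v))"
  have \<alpha>ax: "\<alpha> (axis i 1) = a$i" for i unfolding \<alpha>_def by (metis inv_f_f inj_axis1)
  define g where "g = (\<lambda>y. indicator Dm y * Fdir a b y)"
  have g_meas: "g \<in> borel_measurable borel"
    unfolding g_def Fdir_def by measurable
  have g_nn: "g y \<ge> 0" for y
    unfolding g_def Fdir_def by (auto simp: indicator_def Dm_iff intro!: mult_nonneg_nonneg prod_nonneg zero_le_power)
  have gd: "g (\<Phi> f) = dfun Basis \<alpha> b 1 f" for f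
  proof -
    have nth: "\<Phi> f $ i = f (axis i 1)" for i unfolding \<Phi>_def by (rule Phi_nth)
    have c1: "(\<forall>v\<in>(Basis::(real^'m) set). 0 \<le> f v) = (\<forall>i. 0 \<le> \<Phi> f $ i)"
      unfolding nth vec_Basis by auto
    have c2: "sum f (Basis::(real^'m) set) = (\<Sum>i\<in>UNIV. \<Phi> f $ i)"
      unfolding nth sum_Basis_vec ..
    have c3: "(\<Prod>v\<in>(Basis::(real^'m) set). f v ^ \<alpha> v) = (\<Prod>i\<in>UNIV. (\<Phi> f $ i) ^ (a$i))"
      unfolding nth prod_Basis_vec \<alpha>ax ..
    show ?thesis
      unfolding g_def dfun_def Fdir_def c1 c2 c3 by (simp add: Dm_iff indicator_def)
  qed
  have sa: "sum \<alpha> (Basis::(real^'m) set) = sum (vec_nth a) UNIV"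
    unfolding sum_Basis_vec \<alpha>ax ..
  have pa: "(\<Prod>v\<in>(Basis::(real^'m) set). fact (\<alpha> v)) = (\<Prod>i\<in>UNIV. fact (a$i) :: real)"
    unfolding prod_Basis_vec \<alpha>ax ..
  have "(\<integral>\<^sup>+ y. ennreal (g y) \<partial>lborel) = (\<integral>\<^sup>+ y. ennreal (g y) \<partial>distr (Pi\<^sub>M Basis (\<lambda>_. lborel)) borel \<Phi>)"
    unfolding \<Phi>_def by (subst lborel_eq) simp
  also have "\<dots> = (\<integral>\<^sup>+ f. ennreal (g (\<Phi> f)) \<partial>Pi\<^sub>M Basis (\<lambda>_. lborel))"
    unfolding \<Phi>_def using g_meas by (subst nn_integral_distr) auto
  also have "\<dots> = (\<integral>\<^sup>+ f. ennreal (dfun Basis \<alpha> b 1 f) \<partial>Pi\<^sub>M Basis (\<lambda>_. lborel))"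
    by (simp add: gd)
  also have "\<dots> = ennreal r"
    by (subst dirichlet_PiM) (auto simp: r_def sa pa DIM_cart)
  finally have "(\<integral>\<^sup>+ y. ennreal (g y) \<partial>lborel) = ennreal r" .
  moreover have "r \<ge> 0" unfolding r_def by (auto intro!: mult_nonneg_nonneg prod_nonneg divide_nonneg_nonneg)
  ultimately have "(g has_integral r) UNIV"
    by (intro nn_integral_has_integral g_meas g_nn)
  moreover have "g = (\<lambda>y. if y \<in> Dm then Fdir a b y else 0)"
    unfolding g_def by (auto simp: indicator_def fun_eq_iff)
  ultimately have "((\<lambda>y. if y \<in> Dm then Fdir a b y else 0) has_integral r) UNIV"
    by simp
  then show ?thesis unfolding r_def[symmetric] by (simp add: has_integral_restrict_UNIV)
qed




lemma Gamma_Suc_fact: "Gamma (real (Suc j)) = fact j"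
  using Gamma_fact[of j, where 'a=real] by (simp add: add.commute)


lemma dir_dens_Pm:
  fixes a :: "nat^'m" and y :: "real^'m"
  assumes a: "a \<in> grid UNIV n"
  shows "dir_dens (\<chi> i. a$i + 1) (n + 1 - sum (vec_nth a) UNIV) y = (fact (n + CARD('m)) / fact n) * Pm n y a"
proof -
  define s where "s = sum (vec_nth a) UNIV"
  have sle: "s \<le> n" using a by (auto simp: grid_def s_def)
  have S1: "(\<Sum>i\<in>UNIV. (\<chi> i. a$i + 1) $ i) + (n + 1 - s) = Suc (n + CARD('m))"
    using sle by (simp add: sum_Suc s_def)
  have G1: "Gamma (real ((\<Sum>i\<in>UNIV. (\<chi> i. a$i + 1) $ i) + (n + 1 - s))) = fact (n + CARD('m))"
    unfolding S1 by (rule Gamma_Suc_fact)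
  have G2: "(\<Prod>i\<in>UNIV. Gamma (real ((\<chi> i. a$i + 1) $ i))) = (\<Prod>i\<in>UNIV. fact (a$i))"
    by (intro prod.cong refl) (simp add: Gamma_Suc_fact[symmetric])
  have G3: "Gamma (real (n + 1 - s)) = fact (n - s)"
    using sle Gamma_Suc_fact[of "n - s"] by (simp add: Suc_diff_le)
  have E1: "(\<Prod>i\<in>UNIV. (y$i) ^ ((\<chi> i. a$i + 1) $ i - 1)) = (\<Prod>i\<in>UNIV. (y$i) ^ (a$i))"
    by simp
  have E2: "n + 1 - s - 1 = n - s" by simp
  have Fp: "(\<Prod>i\<in>UNIV. fact (a$i) :: real) > 0" by (intro prod_pos) auto
  show ?thesis
    unfolding dir_dens_def G1 G2 G3 E1 E2 Pm_def mterm_def coef_def s_def[symmetric]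
    using Fp by (simp add: field_simps)
qed


lemma Pm_nonneg: "y \<in> Dm \<Longrightarrow> Pm n y a \<ge> 0"
  unfolding Pm_def mterm_def coef_def
  by (auto simp: Dm_iff intro!: mult_nonneg_nonneg prod_nonneg zero_le_power divide_nonneg_nonneg)

lemma Pm_le1: "y \<in> Dm \<Longrightarrow> a \<in> grid UNIV n \<Longrightarrow> Pm n y a \<le> 1"
proof -
  assume y: "y \<in> Dm" and a: "a \<in> grid UNIV n"
  have "Pm n y a \<le> (\<Sum>a\<in>grid UNIV n. Pm n y a)"
    using y a by (intro member_le_sum Pm_nonneg finite_grid)
  then show ?thesis by (simp add: Pm_sum)
qed

lemma bern_dens_cong: "ceil_vec k \<theta> = ceil_vec k \<theta>' \<Longrightarrow> bern_dens k \<theta> = bern_dens k \<theta>'"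
  unfolding bern_dens_def by (simp add: fun_eq_iff)

lemma bern_dens_eq_Pm:
  fixes a :: "nat^'m"
  assumes a: "a \<in> grid UNIV n" and c: "ceil_vec (Suc n) \<theta> = (\<chi> i. a$i + 1)"
  shows "bern_dens (Suc n) \<theta> y = (fact (n + CARD('m)) / fact n) * Pm n y a"
proof -
  have "Suc n + CARD('m) - (\<Sum>i\<in>UNIV. ceil_vec (Suc n) \<theta> $ i) = n + 1 - sum (vec_nth a) UNIV"
    unfolding c by (simp add: sum_Suc)
  then show ?thesis unfolding bern_dens_def
    using dir_dens_Pm[OF a, of y] c by simp
qed

lemma ceil_vec_grid:
  fixes \<theta> :: "real^'m"
  assumes t: "\<theta> \<in> Dm0" and k: "k \<ge> 1"
  shows "\<exists>a\<in>grid UNIV (k - 1). ceil_vec k \<theta> = (\<chi> i. a$i + 1)"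
proof -
  define c where "c = ceil_vec k \<theta>"
  have pos: "\<theta>$i > 0" for i using t by (auto simp: Dm0_def)
  have c1: "c$i \<ge> 1" for i
  proof -
    have "real k * \<theta>$i > 0" using pos[of i] k by simp
    then have "\<lceil>real k * \<theta>$i\<rceil> \<ge> 1" by (simp add: one_le_ceiling)
    then show ?thesis unfolding c_def ceil_vec_def by (simp add: le_nat_iff)
  qed
  have creal: "real (c$i) < real k * \<theta>$i + 1" for i
  proof -
    have "real k * \<theta>$i > 0" using pos[of i] k by simp
    then have "real (c$i) = real_of_int \<lceil>real k * \<theta>$i\<rceil>" unfolding c_def ceil_vec_def
      by simp
    also have "\<dots> < real k * \<theta>$i + 1" by linarith
    finally show ?thesis .
  qed
  have "real (\<Sum>i\<in>UNIV. c$i) < real k * (\<Sum>i\<in>UNIV. \<theta>$i) + real CARD('m)"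
  proof -
    have "real (\<Sum>i\<in>UNIV. c$i) = (\<Sum>i\<in>UNIV. real (c$i))" by simp
    also have "\<dots> < (\<Sum>i\<in>UNIV. real k * \<theta>$i + 1)"
      by (intro sum_strict_mono creal) auto
    also have "\<dots> = real k * (\<Sum>i\<in>UNIV. \<theta>$i) + real CARD('m)"
      by (simp add: sum.distrib sum_distrib_left)
    finally show ?thesis .
  qed
  also have "\<dots> \<le> real k + real CARD('m)"
    using t k by (auto simp: Dm0_def Dm_def)
  finally have sc: "(\<Sum>i\<in>UNIV. c$i) < k + CARD('m)" by linarith
  define a where "a = (\<chi> i. c$i - 1)"
  have "c$i - 1 + 1 = c$i" for i using c1[of i] by simp
  then have ca: "c = (\<chi> i. a$i + 1)" by (simp add: a_def vec_eq_iff)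
  have "(\<Sum>i\<in>UNIV. c$i) = sum (vec_nth a) UNIV + CARD('m)"
    unfolding ca by (simp add: sum_Suc)
  then have "sum (vec_nth a) UNIV \<le> k - 1" using sc by simp
  then have "a \<in> grid UNIV (k-1)" by (simp add: grid_def)
  then show ?thesis using ca unfolding c_def by blast
qed

lemma bern_dens_bound:
  fixes \<theta> :: "real^'m"
  assumes t: "\<theta> \<in> Dm0" and y: "y \<in> Dm"
  shows "0 \<le> bern_dens (Suc n) \<theta> y \<and> bern_dens (Suc n) \<theta> y \<le> fact (n + CARD('m)) / fact n"
proof -
  obtain a where a: "a \<in> grid UNIV n" and c: "ceil_vec (Suc n) \<theta> = (\<chi> i. a$i + 1)"
    using ceil_vec_grid[OF t, of "Suc n"] by auto
  have K: "fact (n + CARD('m)) / fact n \<ge> (0::real)" by simp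
  have "fact (n + CARD('m)) / fact n * Pm n y a \<le> fact (n + CARD('m)) / fact n * 1"
    using Pm_le1[OF y a] K by (intro mult_left_mono) auto
  then show ?thesis unfolding bern_dens_eq_Pm[OF a c]
    using Pm_nonneg[OF y, of n a] K by simp
qed

definition ctr :: "nat \<Rightarrow> nat^'m \<Rightarrow> real^'m" where
  "ctr n a = (\<chi> i. (real (a$i) + 1 / (2 * real CARD('m))) / real (Suc n))"

lemma ctr_Dm0:
  assumes a: "a \<in> grid UNIV n"
  shows "ctr n a \<in> (Dm0 :: (real^'m) set)"
proof -
  define s :: real where "s = 1 / (2 * real CARD('m))"
  have s: "s > 0" by (simp add: s_def)
  have pos: "ctr n a $ i > 0" for i unfolding ctr_def s_def[symmetric] using s by simp
  have "(\<Sum>i\<in>UNIV. ctr n a $ i) = (\<Sum>i\<in>UNIV. real (a$i) + s) / real (Suc n)"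
    unfolding ctr_def s_def[symmetric] by (simp add: sum_divide_distrib)
  also have "(\<Sum>i\<in>UNIV. real (a$i) + s) = real (sum (vec_nth a) UNIV) + 1/2"
    by (simp add: sum.distrib s_def)
  also have "real (sum (vec_nth a) UNIV) + 1/2 \<le> real n + 1"
  proof -
    have "sum (vec_nth a) UNIV \<le> n" using a by (simp add: grid_def)
    then have "real (sum (vec_nth a) UNIV) \<le> real n" by (simp only: of_nat_le_iff)
    then show ?thesis by linarith
  qed
  finally have "(\<Sum>i\<in>UNIV. ctr n a $ i) \<le> 1"
    by (simp add: divide_right_mono add.commute)
  then show ?thesis using pos unfolding Dm0_def Dm_iff by (auto intro: less_imp_le)
qed

definition crad :: "nat \<Rightarrow> nat \<Rightarrow> real" where
  "crad m n = 1 / (4 * real m * real (Suc n))"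

lemma ceil_vec_near_ctr:
  fixes \<theta> :: "real^'m"
  assumes d: "dist \<theta> (ctr n a) < crad CARD('m) n"
  shows "ceil_vec (Suc n) \<theta> = (\<chi> i. a$i + 1)"
proof -
  define s :: real where "s = 1 / (2 * real CARD('m))"
  have s: "s > 0" "s \<le> 1/2" by (auto simp: s_def field_simps)
  have k: "real (Suc n) > 0" by simp
  have cr: "crad CARD('m) n = s / (2 * real (Suc n))" by (simp add: crad_def s_def field_simps)
  show ?thesis
  proof (subst vec_eq_iff, intro allI)
    fix i
    have "\<bar>\<theta>$i - ctr n a $ i\<bar> \<le> dist \<theta> (ctr n a)"
      by (metis dist_real_def dist_vec_nth_le)
    then have di: "\<bar>\<theta>$i - ctr n a $ i\<bar> < s / (2 * real (Suc n))" using d cr by simp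
    have "\<bar>real (Suc n) * \<theta>$i - (real (a$i) + s)\<bar> = real (Suc n) * \<bar>\<theta>$i - ctr n a $ i\<bar>"
      unfolding ctr_def s_def[symmetric] using k
      by (simp add: abs_mult[symmetric] field_simps del: of_nat_Suc)
    also have "\<dots> < real (Suc n) * (s / (2 * real (Suc n)))"
      using di k by (intro mult_strict_left_mono) auto
    also have "\<dots> = s / 2" using k by (simp add: field_simps del: of_nat_Suc)
    finally have b: "\<bar>real (Suc n) * \<theta>$i - (real (a$i) + s)\<bar> < s / 2" .
    from b have b1: "real (Suc n) * \<theta>$i - (real (a$i) + s) < s / 2"
      and b2: "-(s/2) < real (Suc n) * \<theta>$i - (real (a$i) + s)" by (simp_all only: abs_less_iff) linarith+
    have "\<lceil>real (Suc n) * \<theta>$i\<rceil> = int (a$i) + 1"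
      using b1 b2 s by (subst ceiling_eq_iff) auto
    then show "ceil_vec (Suc n) \<theta> $ i = (\<chi> i. a$i + 1) $ i"
      unfolding ceil_vec_def by (simp add: nat_add_distrib del: of_nat_Suc)
  qed
qed


definition pt :: "nat \<Rightarrow> nat^'m \<Rightarrow> real^'m" where
  "pt n a = (\<chi> i. real (a$i) / real n)"

lemma pt_Dm:
  assumes a: "a \<in> grid UNIV n" and n: "n \<ge> 1"
  shows "pt n a \<in> Dm"
proof -
  have "(\<Sum>i\<in>UNIV. pt n a $ i) = real (sum (vec_nth a) UNIV) / real n"
    by (simp add: pt_def sum_divide_distrib)
  also have "\<dots> \<le> 1"
  proof -
    have "sum (vec_nth a) UNIV \<le> n" using a by (simp add: grid_def)
    then have "real (sum (vec_nth a) UNIV) \<le> real n" by (simp only: of_nat_le_iff)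
    then show ?thesis using n by simp
  qed
  finally show ?thesis unfolding Dm_iff by (simp add: pt_def)
qed

lemma dist_sq_vec: "(dist (x::real^'m) y)^2 = (\<Sum>i\<in>UNIV. (x$i - y$i)^2)"
  unfolding dist_vec_def L2_set_def dist_real_def
  by (simp add: sum_nonneg)

lemma Pm_var:
  fixes y :: "real^'m"
  assumes y: "y \<in> Dm" and n: "n \<ge> 1"
  shows "(\<Sum>a\<in>grid UNIV n. Pm n y a * (dist (pt n a) y)^2) \<le> real CARD('m) / real n"
proof -
  have "(\<Sum>a\<in>grid UNIV n. Pm n y a * (dist (pt n a) y)^2)
      = (\<Sum>i\<in>UNIV. \<Sum>a\<in>grid UNIV n. Pm n y a * (real (a$i) / real n - y$i)^2)"
    unfolding dist_sq_vec by (simp add: sum_distrib_left pt_def sum.swap[of _ UNIV])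
  also have "\<dots> = (\<Sum>i\<in>UNIV. y$i * (1 - y$i) / real n)"
    by (intro sum.cong refl) (simp add: Pm_marg[where \<phi>="\<lambda>j. (real j / real _ - _)^2"] Bernstein_var[OF n])
  also have "\<dots> \<le> (\<Sum>i\<in>(UNIV::'m set). 1 / real n)"
  proof (rule sum_mono)
    fix i
    have "0 \<le> y$i" "y$i \<le> 1" using y by (auto simp: Dm_def)
    then have "y$i * (1 - y$i) \<le> 1" by (intro mult_le_one) auto
    then show "y$i * (1 - y$i) / real n \<le> 1 / real n" by (rule divide_right_mono) simp
  qed
  also have "\<dots> = real CARD('m) / real n" by simp
  finally show ?thesis .
qed

lemma bern_approx:
  fixes f :: "real^'m \<Rightarrow> real" and y :: "real^'m"
  assumes M: "\<And>y. y \<in> Dm \<Longrightarrow> \<bar>f y\<bar> \<le> M"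
    and uc: "\<And>y y'. y \<in> Dm \<Longrightarrow> y' \<in> Dm \<Longrightarrow> dist y y' < \<delta> \<Longrightarrow> \<bar>f y - f y'\<bar> \<le> \<eta>"
    and \<delta>: "\<delta> > 0" and \<eta>: "\<eta> \<ge> 0" and n: "n \<ge> 1" and y: "y \<in> Dm"
  shows "\<bar>(\<Sum>a\<in>grid UNIV n. f (pt n a) * Pm n y a) - f y\<bar> \<le> \<eta> + 2 * M * real CARD('m) / (real n * \<delta>^2)"
proof -
  have M0: "M \<ge> 0" using M[OF y] by simp
  have pw: "\<bar>f (pt n a) - f y\<bar> \<le> \<eta> + 2 * M / \<delta>^2 * (dist (pt n a) y)^2" if a: "a \<in> grid UNIV n" for a
  proof (cases "dist (pt n a) y < \<delta>")
    case True
    then have "\<bar>f (pt n a) - f y\<bar> \<le> \<eta>" using uc[OF pt_Dm[OF a n] y] by simp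
    moreover have "0 \<le> 2 * M / \<delta>^2 * (dist (pt n a) y)^2" using M0 by simp
    ultimately show ?thesis by linarith
  next
    case False
    then have "\<delta>^2 \<le> (dist (pt n a) y)^2" using \<delta> by (intro power_mono) auto
    then have "1 \<le> (dist (pt n a) y)^2 / \<delta>^2" using \<delta> by simp
    then have "2 * M * 1 \<le> 2 * M * ((dist (pt n a) y)^2 / \<delta>^2)" using M0 by (intro mult_left_mono) auto
    moreover have "\<bar>f (pt n a) - f y\<bar> \<le> 2 * M" using M[OF pt_Dm[OF a n]] M[OF y] by linarith
    ultimately show ?thesis using \<eta> by simp
  qed
  have "(\<Sum>a\<in>grid UNIV n. f (pt n a) * Pm n y a) - f y = (\<Sum>a\<in>grid UNIV n. (f (pt n a) - f y) * Pm n y a)"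
    by (simp add: left_diff_distrib sum_subtractf sum_distrib_left[symmetric] Pm_sum)
  then have "\<bar>(\<Sum>a\<in>grid UNIV n. f (pt n a) * Pm n y a) - f y\<bar> \<le> (\<Sum>a\<in>grid UNIV n. \<bar>f (pt n a) - f y\<bar> * Pm n y a)"
    using Pm_nonneg[OF y] by (auto intro: order_trans[OF sum_abs] simp: abs_mult)
  also have "\<dots> \<le> (\<Sum>a\<in>grid UNIV n. (\<eta> + 2 * M / \<delta>^2 * (dist (pt n a) y)^2) * Pm n y a)"
    using Pm_nonneg[OF y] pw by (intro sum_mono mult_right_mono) auto
  also have "\<dots> = \<eta> * (\<Sum>a\<in>grid UNIV n. Pm n y a) + 2 * M / \<delta>^2 * (\<Sum>a\<in>grid UNIV n. Pm n y a * (dist (pt n a) y)^2)"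
    by (simp add: algebra_simps sum.distrib sum_distrib_left)
  also have "\<dots> \<le> \<eta> + 2 * M / \<delta>^2 * (real CARD('m) / real n)"
  proof -
    have "2 * M / \<delta>^2 * (\<Sum>a\<in>grid UNIV n. Pm n y a * (dist (pt n a) y)^2) \<le> 2 * M / \<delta>^2 * (real CARD('m) / real n)"
      using Pm_var[OF y n] M0 \<delta> by (intro mult_left_mono) auto
    then show ?thesis by (simp add: Pm_sum)
  qed
  also have "\<dots> = \<eta> + 2 * M * real CARD('m) / (real n * \<delta>^2)" by simp
  finally show ?thesis .
qed


lemma Pm_integral:
  fixes a :: "nat^'m"
  assumes a: "a \<in> grid UNIV n"
  shows "((\<lambda>y. Pm n y a) has_integral (fact n / fact (n + CARD('m)))) Dm"
proof -
  define b where "b = n - sum (vec_nth a) UNIV"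
  have sle: "sum (vec_nth a) UNIV \<le> n" using a by (simp add: grid_def)
  have e: "sum (vec_nth a) UNIV + b + CARD('m) = n + CARD('m)" using sle by (simp add: b_def)
  have P: "Pm n y a = coef UNIV n a * Fdir a b y" for y
    by (simp add: Pm_def mterm_def Fdir_def b_def)
  have "((\<lambda>y. coef UNIV n a * Fdir a b y) has_integral
      (coef UNIV n a * ((\<Prod>i\<in>UNIV. fact (a$i)) * fact b / fact (n + CARD('m))))) Dm"
    using dirichlet_integral[of a b] unfolding e by (rule has_integral_mult_right)
  moreover have "coef UNIV n a * ((\<Prod>i\<in>UNIV. fact (a$i)) * fact b / fact (n + CARD('m))) = fact n / fact (n + CARD('m))"
  proof -
    have "(\<Prod>i\<in>UNIV. fact (a$i) :: real) > 0" by (intro prod_pos) auto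
    then show ?thesis by (simp add: coef_def b_def)
  qed
  ultimately show ?thesis by (simp add: P)
qed

lemma Dm_sub_cbox: "(Dm :: (real^'m) set) \<subseteq> cbox 0 1"
  by (auto simp: Dm_def mem_box_cart)

lemma compact_Dm: "compact (Dm :: (real^'m) set)"
  using closed_Dm bounded_subset[OF bounded_cbox Dm_sub_cbox] by (simp add: compact_eq_bounded_closed)

lemma int_bound_Dm:
  fixes f :: "real^'m \<Rightarrow> real"
  assumes I: "(f has_integral I) Dm" and b: "\<And>y. y \<in> Dm \<Longrightarrow> \<bar>f y\<bar> \<le> e"
  shows "\<bar>I\<bar> \<le> e"
proof -
  have e0: "e \<ge> 0" using b[of 0] by (auto simp: Dm_def)
  define g where "g = (\<lambda>y. if y \<in> Dm then f y else 0)"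
  have "(g has_integral I) Dm" using I by (rule has_integral_eq[rotated]) (simp add: g_def)
  then have "(g has_integral I) (cbox 0 1)"
    by (rule has_integral_on_superset) (auto simp: g_def Dm_sub_cbox)
  then have "norm I \<le> e * Henstock_Kurzweil_Integration.content (cbox (0::real^'m) 1)"
    by (rule has_integral_bound[OF e0]) (auto simp: g_def b e0)
  moreover have "Henstock_Kurzweil_Integration.content (cbox (0::real^'m) 1) = 1"
  proof -
    have "(0::real^'m) \<in> cbox 0 1" by (simp add: mem_box_cart)
    then have "cbox (0::real^'m) 1 \<noteq> {}" by blast
    then show ?thesis by (subst content_cbox_cart) auto
  qed
  ultimately show ?thesis by simp
qed


lemma Dtilde_facts:
  fixes q :: "'x::metric_space \<Rightarrow> real^'m \<Rightarrow> real"
  assumes q: "q \<in> Dtilde X" and X: "compact X"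
  shows "\<exists>M\<ge>0. \<forall>x\<in>X. \<forall>y\<in>Dm. \<bar>q x y\<bar> \<le> M"
    and "\<And>\<eta>. \<eta> > 0 \<Longrightarrow> \<exists>\<delta>>0. \<forall>x\<in>X. \<forall>y\<in>Dm. \<forall>y'\<in>Dm. dist y y' < \<delta> \<longrightarrow> \<bar>q x y - q x y'\<bar> \<le> \<eta>"
    and "\<And>y. y \<in> Dm \<Longrightarrow> continuous_on X (\<lambda>x. q x y)"
proof -
  define Q where "Q = (\<lambda>(y,x). q x y)"
  have cQ: "continuous_on (Dm \<times> X) Q" using q by (simp add: Dtilde_def Q_def)
  have K: "compact (Dm \<times> X)" using compact_Dm X by (rule compact_Times)
  have "bounded (Q ` (Dm \<times> X))" by (intro compact_imp_bounded compact_continuous_image cQ K)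
  then obtain M where M: "\<And>p. p \<in> Dm \<times> X \<Longrightarrow> \<bar>Q p\<bar> \<le> M"
    unfolding bounded_iff by auto
  have "\<forall>x\<in>X. \<forall>y\<in>Dm. \<bar>q x y\<bar> \<le> max M 0" using M by (force simp: Q_def)
  then show "\<exists>M\<ge>0. \<forall>x\<in>X. \<forall>y\<in>Dm. \<bar>q x y\<bar> \<le> M" by (intro exI[of _ "max M 0"]) auto
  have uc: "uniformly_continuous_on (Dm \<times> X) Q" by (rule compact_uniformly_continuous[OF cQ K])
  fix \<eta> :: real assume \<eta>: "\<eta> > 0"
  obtain d where d: "d > 0" and dd: "\<And>p p'. p \<in> Dm \<times> X \<Longrightarrow> p' \<in> Dm \<times> X \<Longrightarrow> dist p' p < d \<Longrightarrow> dist (Q p') (Q p) < \<eta>"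
    using uc \<eta> unfolding uniformly_continuous_on_def by metis
  show "\<exists>\<delta>>0. \<forall>x\<in>X. \<forall>y\<in>Dm. \<forall>y'\<in>Dm. dist y y' < \<delta> \<longrightarrow> \<bar>q x y - q x y'\<bar> \<le> \<eta>"
  proof (intro exI[of _ d] conjI ballI impI d)
    fix x and y y' :: "real^'m" assume x: "x \<in> X" and y: "y \<in> Dm" and y': "y' \<in> Dm" and dy: "dist y y' < d"
    have "dist (y,x) (y',x) = dist y y'" by (simp add: dist_Pair_Pair)
    then have "dist (Q (y,x)) (Q (y',x)) < \<eta>" using dd[of "(y',x)" "(y,x)"] x y y' dy by auto
    then show "\<bar>q x y - q x y'\<bar> \<le> \<eta>" by (simp add: Q_def dist_real_def)
  qed
next
  fix y :: "real^'m" assume y: "y \<in> Dm"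
  define Q where "Q = (\<lambda>(y,x). q x y)"
  have cQ: "continuous_on (Dm \<times> X) Q" using q by (simp add: Dtilde_def Q_def)
  have "continuous_on X (Q \<circ> (\<lambda>x. (y,x)))"
    by (intro continuous_on_compose continuous_intros continuous_on_subset[OF cQ]) (auto simp: y)
  then show "continuous_on X (\<lambda>x. q x y)" by (simp add: Q_def o_def)
qed


lemma key_grid:
  fixes q :: "'x::metric_space \<Rightarrow> real^'m \<Rightarrow> real"
  assumes q: "q \<in> Dtilde X" and X: "compact X" and \<epsilon>: "\<epsilon> > 0"
  shows "\<exists>n\<ge>1. \<exists>c. (\<forall>a\<in>grid UNIV n. continuous_on X (c a) \<and> (\<forall>x\<in>X. c a x > 0))
      \<and> (\<forall>x\<in>X. (\<Sum>a\<in>grid UNIV n. c a x) = 1)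
      \<and> (\<forall>x\<in>X. \<forall>y\<in>Dm. \<bar>(\<Sum>a\<in>grid UNIV n. c a x * (fact (n + CARD('m)) / fact n * Pm n y a)) - q x y\<bar> < \<epsilon>)"
proof -
  obtain M where M0: "M \<ge> 0" and M: "\<And>x y. x \<in> X \<Longrightarrow> y \<in> Dm \<Longrightarrow> \<bar>q x y\<bar> \<le> M"
    using Dtilde_facts(1)[OF q X] by blast
  have qnn: "\<And>x y. x \<in> X \<Longrightarrow> y \<in> Dm \<Longrightarrow> q x y \<ge> 0" using q by (auto simp: Dtilde_def)
  have qint: "\<And>x. x \<in> X \<Longrightarrow> (q x has_integral 1) Dm" using q by (auto simp: Dtilde_def)
  have qc: "\<And>y. y \<in> Dm \<Longrightarrow> continuous_on X (\<lambda>x. q x y)" by (rule Dtilde_facts(3)[OF q X])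
  define e1 where "e1 = min (1/2) (\<epsilon> / (8 * (1 + M)))"
  have e1: "e1 > 0" "e1 \<le> 1/2" "2 * (1 + M) * e1 \<le> \<epsilon> / 4"
  proof -
    show "e1 > 0" using \<epsilon> M0 by (auto simp: e1_def)
    show "e1 \<le> 1/2" unfolding e1_def by (rule min.cobounded1)
    have "e1 \<le> \<epsilon> / (8 * (1 + M))" by (simp add: e1_def)
    then have "2 * (1 + M) * e1 \<le> 2 * (1 + M) * (\<epsilon> / (8 * (1 + M)))" using M0 by (intro mult_left_mono) auto
    also have "\<dots> = \<epsilon> / 4" using M0 by (simp add: field_simps)
    finally show "2 * (1 + M) * e1 \<le> \<epsilon> / 4" .
  qed
  obtain \<delta> where \<delta>: "\<delta> > 0" and uc: "\<And>x y y'. x \<in> X \<Longrightarrow> y \<in> Dm \<Longrightarrow> y' \<in> Dm \<Longrightarrow> dist y y' < \<delta> \<Longrightarrow> \<bar>q x y - q x y'\<bar> \<le> e1 / 2"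
    using Dtilde_facts(2)[OF q X, of "e1/2"] e1 by auto
  obtain n0 :: nat where n0: "4 * M * real CARD('m) / (\<delta>^2 * e1) < real n0"
    using reals_Archimedean2 by blast
  define n where "n = Suc n0"
  have n1: "n \<ge> 1" by (simp add: n_def)
  have npos: "real n > 0" by (simp add: n_def)
  have nb: "2 * M * real CARD('m) / (real n * \<delta>^2) \<le> e1 / 2"
  proof -
    have "4 * M * real CARD('m) / (\<delta>^2 * e1) \<le> real n" using n0 by (simp add: n_def)
    then have "4 * M * real CARD('m) \<le> real n * (\<delta>^2 * e1)" using \<delta> e1 by (simp add: pos_divide_le_eq)
    then show ?thesis using \<delta> npos by (simp add: pos_divide_le_eq field_simps)
  qed
  define G where "G = grid (UNIV::'m set) n"
  have fG: "finite G" by (simp add: G_def finite_grid)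
  have G0: "0 \<in> G" by (simp add: G_def grid_def)
  have cG: "card G > 0" using fG G0 card_gt_0_iff by blast
  define Kf :: real where "Kf = fact n / fact (n + CARD('m))"
  define K :: real where "K = fact (n + CARD('m)) / fact n"
  have Kf0: "Kf > 0" and K0: "K > 0" and KK: "Kf * K = 1" by (simp_all add: Kf_def K_def)
  define B where "B = (\<lambda>x y. \<Sum>a\<in>G. q x (pt n a) * Pm n y a)"
  have approx: "\<bar>B x y - q x y\<bar> \<le> e1" if x: "x \<in> X" and y: "y \<in> Dm" for x y
  proof -
    have "\<bar>B x y - q x y\<bar> \<le> e1 / 2 + 2 * M * real CARD('m) / (real n * \<delta>^2)"
      unfolding B_def G_def
      by (rule bern_approx[where f="q x"]) (use M x uc \<delta> e1 n1 y in auto)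
    then show ?thesis using nb by simp
  qed
  define S where "S = (\<lambda>x. \<Sum>a\<in>G. q x (pt n a) * Kf)"
  have Sint: "((\<lambda>y. B x y - q x y) has_integral (S x - 1)) Dm" if x: "x \<in> X" for x
  proof -
    have "((\<lambda>y. B x y) has_integral S x) Dm"
      unfolding B_def S_def
      by (intro has_integral_sum fG has_integral_mult_right) (simp add: Kf_def Pm_integral G_def)
    then show ?thesis by (intro has_integral_diff qint x)
  qed
  have S1: "\<bar>S x - 1\<bar> \<le> e1" if x: "x \<in> X" for x
    using int_bound_Dm[OF Sint[OF x]] approx[OF x] by blast
  have Spos: "S x \<ge> 1/2" if x: "x \<in> X" for x using S1[OF x] e1 by linarith
  have Scont: "continuous_on X S"
    unfolding S_def
    by (intro continuous_on_sum continuous_on_mult_right qc) (use n1 in \<open>auto simp: G_def pt_Dm\<close>)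
  define \<tau> where "\<tau> = min (1/2) (\<epsilon> / (4 * (K + M + 1)))"
  have \<tau>: "\<tau> > 0" "\<tau> \<le> 1/2" "\<tau> * (K + M) \<le> \<epsilon> / 4"
  proof -
    show "\<tau> > 0" using \<epsilon> K0 M0 by (auto simp: \<tau>_def)
    show "\<tau> \<le> 1/2" unfolding \<tau>_def by (rule min.cobounded1)
    have "\<tau> * (K + M) \<le> \<epsilon> / (4 * (K + M + 1)) * (K + M)"
      using K0 M0 by (intro mult_right_mono) (auto simp: \<tau>_def)
    also have "\<dots> \<le> \<epsilon> / 4"
      using K0 M0 \<epsilon> by (simp add: field_simps)
    finally show "\<tau> * (K + M) \<le> \<epsilon> / 4" .
  qed
  define c where "c = (\<lambda>a x. (1 - \<tau>) * (q x (pt n a) * Kf / S x) + \<tau> / real (card G))"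
  have c_cont: "continuous_on X (c a)" if a: "a \<in> G" for a
  proof -
    have p: "pt n a \<in> Dm" using a n1 by (simp add: G_def pt_Dm)
    show ?thesis unfolding c_def
      by (intro continuous_intros qc p Scont) (use Spos in force)
  qed
  have c_pos: "c a x > 0" if a: "a \<in> G" and x: "x \<in> X" for a x
  proof -
    have p: "pt n a \<in> Dm" using a n1 by (simp add: G_def pt_Dm)
    have "q x (pt n a) * Kf / S x \<ge> 0" using qnn[OF x p] Kf0 Spos[OF x] by simp
    moreover have "1 - \<tau> \<ge> 0" using \<tau> by simp
    ultimately have "(1 - \<tau>) * (q x (pt n a) * Kf / S x) \<ge> 0" by (rule mult_nonneg_nonneg[rotated])
    moreover have "\<tau> / real (card G) > 0" using \<tau> cG by simp
    ultimately show ?thesis unfolding c_def by linarith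
  qed
  have c_sum: "(\<Sum>a\<in>G. c a x) = 1" if x: "x \<in> X" for x
  proof -
    have "(\<Sum>a\<in>G. c a x) = (1 - \<tau>) / S x * (\<Sum>a\<in>G. q x (pt n a) * Kf) + real (card G) * (\<tau> / real (card G))"
      unfolding c_def by (simp add: sum.distrib sum_distrib_left algebra_simps)
    also have "\<dots> = 1"
    proof -
      have "(\<Sum>a\<in>G. q x (pt n a) * Kf) = S x" by (simp add: S_def)
      then show ?thesis using Spos[OF x] cG by simp
    qed
    finally show ?thesis .
  qed
  have c_err: "\<bar>(\<Sum>a\<in>G. c a x * (K * Pm n y a)) - q x y\<bar> < \<epsilon>" if x: "x \<in> X" and y: "y \<in> Dm" for x y
  proof -
    define V where "V = (\<Sum>a\<in>G. c a x * (K * Pm n y a))"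
    have V: "V = (1 - \<tau>) * (B x y / S x) + \<tau> * (K / real (card G))"
    proof -
      have Sne: "S x \<noteq> 0" using Spos[OF x] by simp
      have pw: "c a x * (K * Pm n y a) = (1 - \<tau>) / S x * (Kf * K) * (q x (pt n a) * Pm n y a) + \<tau> / real (card G) * K * Pm n y a" for a
        unfolding c_def using Sne by (simp add: field_simps)
      have "V = (1 - \<tau>) / S x * (Kf * K) * (\<Sum>a\<in>G. q x (pt n a) * Pm n y a) + \<tau> / real (card G) * K * (\<Sum>a\<in>G. Pm n y a)"
        unfolding V_def pw by (simp add: sum.distrib sum_distrib_left)
      also have "(\<Sum>a\<in>G. Pm n y a) = 1" by (simp add: G_def Pm_sum)
      also have "(\<Sum>a\<in>G. q x (pt n a) * Pm n y a) = B x y" by (simp add: B_def)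
      finally show ?thesis by (simp add: KK)
    qed
    have Sx: "S x \<ge> 1/2" by (rule Spos[OF x])
    have h1: "\<bar>B x y / S x - q x y\<bar> \<le> 2 * (1 + M) * e1"
    proof -
      have "\<bar>B x y - S x * q x y\<bar> \<le> \<bar>B x y - q x y\<bar> + \<bar>q x y\<bar> * \<bar>S x - 1\<bar>"
        by (simp add: abs_mult[symmetric] algebra_simps abs_triangle_ineq4 order_trans[OF _ abs_triangle_ineq])
      also have "\<dots> \<le> e1 + M * e1"
        using approx[OF x y] M[OF x y] S1[OF x] by (intro add_mono mult_mono) auto
      finally have a: "\<bar>B x y - S x * q x y\<bar> \<le> (1 + M) * e1" by (simp add: algebra_simps)
      have "\<bar>B x y / S x - q x y\<bar> = \<bar>B x y - S x * q x y\<bar> / S x"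
        using Sx by (simp add: field_simps)
      also have "\<dots> \<le> (1 + M) * e1 / (1/2)"
        using a Sx e1 M0 by (intro frac_le) auto
      finally have "\<bar>B x y / S x - q x y\<bar> \<le> (1 + M) * e1 / (1/2)" .
      then show ?thesis by (simp add: algebra_simps)
    qed
    have h2: "\<bar>K / real (card G) - q x y\<bar> \<le> K + M"
    proof -
      have "K / real (card G) \<le> K" using K0 cG by (simp add: divide_le_eq)
      moreover have "K / real (card G) \<ge> 0" using K0 by simp
      ultimately show ?thesis using M[OF x y] by linarith
    qed
    have "V - q x y = (1 - \<tau>) * (B x y / S x - q x y) + \<tau> * (K / real (card G) - q x y)"
      unfolding V by (simp add: algebra_simps)
    then have "\<bar>V - q x y\<bar> \<le> (1 - \<tau>) * \<bar>B x y / S x - q x y\<bar> + \<tau> * \<bar>K / real (card G) - q x y\<bar>"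
      using \<tau> by (simp add: abs_mult order_trans[OF abs_triangle_ineq])
    also have "\<dots> \<le> 1 * (2 * (1 + M) * e1) + \<tau> * (K + M)"
      using h1 h2 \<tau> by (intro add_mono mult_mono) auto
    also have "\<dots> \<le> \<epsilon> / 4 + \<epsilon> / 4" using e1 \<tau> by simp
    finally show ?thesis unfolding V_def using \<epsilon> by simp
  qed
  show ?thesis
    by (intro exI[of _ n] exI[of _ c] conjI n1)
       (use c_cont c_pos c_sum c_err in \<open>auto simp: G_def K_def\<close>)
qed


lemma crad_pos: "m > 0 \<Longrightarrow> crad m n > 0"
  by (simp add: crad_def)

lemma key:
  fixes q :: "'x::metric_space \<Rightarrow> real^'m \<Rightarrow> real"
  assumes q: "q \<in> Dtilde X" and X: "compact X" and \<epsilon>: "\<epsilon> > 0"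
  shows "\<exists>k\<ge>1. \<exists>L::nat\<ge>1. \<exists>\<xi> c r C. r > 0 \<and> (\<forall>l<L. \<xi> l \<in> Dm0) \<and>
     (\<forall>l<L. \<forall>\<theta>. dist \<theta> (\<xi> l) < r \<longrightarrow> bern_dens k \<theta> = bern_dens k (\<xi> l)) \<and>
     (\<forall>\<theta>\<in>(Dm0::(real^'m) set). \<forall>y\<in>Dm. 0 \<le> bern_dens k \<theta> y \<and> bern_dens k \<theta> y \<le> C) \<and>
     (\<forall>l<L. continuous_on X (c l) \<and> (\<forall>x\<in>X. c l x > 0)) \<and> (\<forall>x\<in>X. (\<Sum>l<L. c l x) = 1) \<and>
     (\<forall>x\<in>X. \<forall>y\<in>Dm. \<bar>(\<Sum>l<L. c l x * bern_dens k (\<xi> l) y) - q x y\<bar> < \<epsilon>)"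
proof -
  from key_grid[OF q X \<epsilon>] obtain n c where n1: "n \<ge> 1"
    and cc: "\<forall>a\<in>grid UNIV n. continuous_on X (c a) \<and> (\<forall>x\<in>X. c a x > 0)"
    and cs: "\<forall>x\<in>X. (\<Sum>a\<in>grid UNIV n. c a x) = 1"
    and ce: "\<forall>x\<in>X. \<forall>y\<in>Dm. \<bar>(\<Sum>a\<in>grid UNIV n. c a x * (fact (n + CARD('m)) / fact n * Pm n y a)) - q x y\<bar> < \<epsilon>"
    by (elim exE conjE) (rule that; assumption)
  define G where "G = grid (UNIV::'m set) n"
  have fG: "finite G" by (simp add: G_def finite_grid)
  have G0: "0 \<in> G" by (simp add: G_def grid_def)
  obtain e where e: "bij_betw e {0..<card G} G" using ex_bij_betw_nat_finite[OF fG] by blast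
  define L where "L = card G"
  have "card G > 0" using fG G0 by (auto simp: card_gt_0_iff)
  then have L1: "L \<ge> 1" by (simp add: L_def)
  have eG: "l < L \<Longrightarrow> e l \<in> G" for l using e unfolding L_def bij_betw_def by auto
  have reidx: "(\<Sum>l<L. F (e l)) = (\<Sum>a\<in>G. F a)" for F :: "nat^'m \<Rightarrow> real"
    using sum.reindex_bij_betw[OF e, of F] by (simp add: L_def atLeast0LessThan)
  define r where "r = crad CARD('m) n"
  have r: "r > 0" unfolding r_def by (rule crad_pos) simp
  define C :: real where "C = fact (n + CARD('m)) / fact n"
  have ctr_ceil: "ceil_vec (Suc n) (ctr n a) = (\<chi> i. a$i + 1)" for a :: "nat^'m"
  proof -
    have "crad CARD('m) n > 0" by (rule crad_pos) simp
    then show ?thesis by (intro ceil_vec_near_ctr) simp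
  qed
  have bd: "bern_dens (Suc n) (ctr n a) y = C * Pm n y a" if "a \<in> G" for a y
  proof -
    have "a \<in> grid UNIV n" using that by (simp add: G_def)
    then show ?thesis unfolding C_def by (rule bern_dens_eq_Pm) (rule ctr_ceil)
  qed
  have A1: "\<forall>l<L. ctr n (e l) \<in> Dm0"
    using eG by (simp add: G_def ctr_Dm0)
  have A2: "\<forall>l<L. \<forall>\<theta>. dist \<theta> (ctr n (e l)) < r \<longrightarrow> bern_dens (Suc n) \<theta> = bern_dens (Suc n) (ctr n (e l))"
  proof (intro allI impI)
    fix l \<theta> assume "dist \<theta> (ctr n (e l)) < r"
    then have "ceil_vec (Suc n) \<theta> = ceil_vec (Suc n) (ctr n (e l))"
      unfolding ctr_ceil r_def by (rule ceil_vec_near_ctr)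
    then show "bern_dens (Suc n) \<theta> = bern_dens (Suc n) (ctr n (e l))" by (rule bern_dens_cong)
  qed
  have A3: "\<forall>\<theta>\<in>(Dm0::(real^'m) set). \<forall>y\<in>Dm. 0 \<le> bern_dens (Suc n) \<theta> y \<and> bern_dens (Suc n) \<theta> y \<le> C"
    unfolding C_def using bern_dens_bound[where n=n] by blast
  have A4: "\<forall>l<L. continuous_on X (c (e l)) \<and> (\<forall>x\<in>X. c (e l) x > 0)"
  proof (intro allI impI)
    fix l assume l: "l < L"
    have "e l \<in> grid UNIV n" using eG[OF l] by (simp add: G_def)
    then show "continuous_on X (c (e l)) \<and> (\<forall>x\<in>X. c (e l) x > 0)" by (rule bspec[OF cc])
  qed
  have A5: "\<forall>x\<in>X. (\<Sum>l<L. c (e l) x) = 1"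
  proof
    fix x assume x: "x \<in> X"
    have "(\<Sum>l<L. c (e l) x) = (\<Sum>a\<in>G. c a x)" by (rule reidx)
    moreover have "(\<Sum>a\<in>G. c a x) = 1" using cs x by (simp add: G_def)
    ultimately show "(\<Sum>l<L. c (e l) x) = 1" by simp
  qed
  have A6: "\<forall>x\<in>X. \<forall>y\<in>Dm. \<bar>(\<Sum>l<L. c (e l) x * bern_dens (Suc n) (ctr n (e l)) y) - q x y\<bar> < \<epsilon>"
  proof (intro ballI)
    fix x and y :: "real^'m" assume x: "x \<in> X" and y: "y \<in> Dm"
    have "(\<Sum>l<L. c (e l) x * bern_dens (Suc n) (ctr n (e l)) y) = (\<Sum>l<L. c (e l) x * (C * Pm n y (e l)))"
      using bd eG by (intro sum.cong refl) simp
    also have "\<dots> = (\<Sum>a\<in>G. c a x * (C * Pm n y a))" by (rule reidx)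
    finally have "(\<Sum>l<L. c (e l) x * bern_dens (Suc n) (ctr n (e l)) y) = (\<Sum>a\<in>G. c a x * (C * Pm n y a))" .
    moreover have "\<bar>(\<Sum>a\<in>G. c a x * (C * Pm n y a)) - q x y\<bar> < \<epsilon>"
      using ce[rule_format, OF x y] unfolding G_def C_def .
    ultimately show "\<bar>(\<Sum>l<L. c (e l) x * bern_dens (Suc n) (ctr n (e l)) y) - q x y\<bar> < \<epsilon>" by simp
  qed
  have k1: "Suc n \<ge> 1" by simp
  show ?thesis
    apply (rule exI[of _ "Suc n"])
    apply (rule conjI[OF k1])
    apply (rule exI[of _ L])
    apply (rule conjI[OF L1])
    apply (rule exI[of _ "\<lambda>l. ctr n (e l)"])
    apply (rule exI[of _ "\<lambda>l. c (e l)"])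
    apply (rule exI[of _ r])
    apply (rule exI[of _ C])
    apply (intro conjI)
          apply (fact r)
         apply (fact A1)
        apply (fact A2)
       apply (fact A3)
      apply (fact A4)
     apply (fact A5)
    apply (fact A6)
    done
qed




lemma stick_sum: "(\<Sum>j<N. stick V j) = 1 - (\<Prod>l<N. 1 - V l)"
  by (induction N) (simp_all add: stick_def algebra_simps)

lemma prod_01:
  assumes "\<And>l. l < N \<Longrightarrow> 0 \<le> V l \<and> V l \<le> (1::real)"
  shows "0 \<le> (\<Prod>l<N. 1 - V l) \<and> (\<Prod>l<N. 1 - V l) \<le> 1"
  using assms by (auto intro!: prod_nonneg prod_le_1)

lemma stick_nonneg:
  assumes "\<And>l. 0 \<le> V l \<and> V l \<le> (1::real)"
  shows "stick V j \<ge> 0"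
  using assms unfolding stick_def by (auto intro!: mult_nonneg_nonneg prod_nonneg)

lemma abs_prod': "abs (prod f A :: real) = prod (\<lambda>x. abs (f x)) A"
  by (cases "finite A", induction A rule: finite_induct) (simp_all add: abs_mult)

lemma prod_diff_bound:
  fixes a b :: "nat \<Rightarrow> real"
  assumes "\<And>l. l < N \<Longrightarrow> \<bar>a l\<bar> \<le> 1 \<and> \<bar>b l\<bar> \<le> 1"
  shows "\<bar>(\<Prod>l<N. a l) - (\<Prod>l<N. b l)\<bar> \<le> (\<Sum>l<N. \<bar>a l - b l\<bar>)"
  using assms
proof (induction N)
  case 0 then show ?case by simp
next
  case (Suc N)
  define A where "A = (\<Prod>l<N. a l)"
  define B where "B = (\<Prod>l<N. b l)"
  have IH: "\<bar>A - B\<bar> \<le> (\<Sum>l<N. \<bar>a l - b l\<bar>)" unfolding A_def B_def by (rule Suc.IH) (use Suc.prems in auto)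
  have Bb: "\<bar>B\<bar> \<le> 1" unfolding B_def using Suc.prems by (auto simp: abs_prod' intro!: prod_le_1)
  have ab: "\<bar>a N\<bar> \<le> 1" using Suc.prems by auto
  have "\<bar>A * a N - B * b N\<bar> = \<bar>(A - B) * a N + B * (a N - b N)\<bar>" by (simp add: algebra_simps)
  also have "\<dots> \<le> \<bar>A - B\<bar> * \<bar>a N\<bar> + \<bar>B\<bar> * \<bar>a N - b N\<bar>" by (simp add: abs_mult[symmetric] abs_triangle_ineq)
  also have "\<dots> \<le> \<bar>A - B\<bar> * 1 + 1 * \<bar>a N - b N\<bar>"
    using ab Bb by (intro add_mono mult_mono) auto
  also have "\<dots> \<le> (\<Sum>l<N. \<bar>a l - b l\<bar>) + \<bar>a N - b N\<bar>" using IH by simp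
  finally show ?case by (simp add: A_def B_def)
qed

lemma stick_lip:
  fixes V W :: "nat \<Rightarrow> real"
  assumes "\<And>l. 0 \<le> V l \<and> V l \<le> 1" "\<And>l. 0 \<le> W l \<and> W l \<le> 1"
  shows "\<bar>stick V j - stick W j\<bar> \<le> (\<Sum>l<Suc j. \<bar>V l - W l\<bar>)"
proof -
  have "(\<Prod>l<j. 1 - V l) = (\<Prod>l<j. if l = j then V l else 1 - V l)" by (intro prod.cong) auto
  then have "stick V j = (\<Prod>l<Suc j. if l = j then V l else 1 - V l)"
    unfolding stick_def by simp
  have "(\<Prod>l<j. 1 - W l) = (\<Prod>l<j. if l = j then W l else 1 - W l)" by (intro prod.cong) auto
  then have "stick W j = (\<Prod>l<Suc j. if l = j then W l else 1 - W l)"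
    unfolding stick_def by simp
  moreover note \<open>stick V j = _\<close>
  ultimately have "\<bar>stick V j - stick W j\<bar> \<le> (\<Sum>l<Suc j. \<bar>(if l = j then V l else 1 - V l) - (if l = j then W l else 1 - W l)\<bar>)"
    using assms by (simp only:) (rule prod_diff_bound, auto)
  also have "\<dots> = (\<Sum>l<Suc j. \<bar>V l - W l\<bar>)"
    by (intro sum.cong refl) (auto simp: abs_minus_commute)
  finally show ?thesis .
qed

lemma mix_summable_bounds:
  fixes V D :: "nat \<Rightarrow> real"
  assumes V: "\<And>l. 0 \<le> V l \<and> V l \<le> 1" and D: "\<And>j. 0 \<le> D j \<and> D j \<le> C"
  shows "summable (\<lambda>j. stick V j * D j)"
    and "(\<Sum>j<N. stick V j * D j) \<le> (\<Sum>j. stick V j * D j)"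
    and "(\<Sum>j. stick V j * D j) \<le> (\<Sum>j<N. stick V j * D j) + C * (\<Prod>l<N. 1 - V l)"
proof -
  have sn: "stick V j \<ge> 0" for j by (rule stick_nonneg[OF V])
  have C0: "C \<ge> 0" using D[of 0] by simp
  have fn: "stick V j * D j \<ge> 0" for j using sn D by simp
  have part: "(\<Sum>j<M. stick V j * D j) \<le> (\<Sum>j<N. stick V j * D j) + C * (\<Prod>l<N. 1 - V l)" for M
  proof (cases "M \<le> N")
    case True
    then have "(\<Sum>j<M. stick V j * D j) \<le> (\<Sum>j<N. stick V j * D j)"
      by (intro sum_mono2) (auto simp: fn)
    moreover have "C * (\<Prod>l<N. 1 - V l) \<ge> 0" using C0 prod_01[of N V] V by simp
    ultimately show ?thesis by linarith
  next
    case False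
    then have MN: "{..<M} = {..<N} \<union> {N..<M}" "{..<N} \<inter> {N..<M} = {}" by auto
    have "(\<Sum>j<M. stick V j * D j) = (\<Sum>j<N. stick V j * D j) + (\<Sum>j\<in>{N..<M}. stick V j * D j)"
      unfolding MN(1) by (rule sum.union_disjoint) (use MN in auto)
    also have "(\<Sum>j\<in>{N..<M}. stick V j * D j) \<le> (\<Sum>j\<in>{N..<M}. stick V j * C)"
      using sn D by (intro sum_mono mult_left_mono) auto
    also have "\<dots> = C * ((\<Sum>j<M. stick V j) - (\<Sum>j<N. stick V j))"
    proof -
      have "(\<Sum>j<M. stick V j) = (\<Sum>j<N. stick V j) + (\<Sum>j\<in>{N..<M}. stick V j)"
        unfolding MN(1) by (rule sum.union_disjoint) (use MN in auto)
      then show ?thesis by (simp add: sum_distrib_left algebra_simps)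
    qed
    also have "\<dots> = C * ((\<Prod>l<N. 1 - V l) - (\<Prod>l<M. 1 - V l))" by (simp add: stick_sum)
    also have "\<dots> \<le> C * (\<Prod>l<N. 1 - V l)"
      using C0 prod_01[of M V] V by (intro mult_left_mono) auto
    finally show ?thesis by simp
  qed
  show sm: "summable (\<lambda>j. stick V j * D j)"
    by (rule summableI_nonneg_bounded[where x="(\<Sum>j<N. stick V j * D j) + C * (\<Prod>l<N. 1 - V l)"])
       (use fn part in auto)
  show "(\<Sum>j<N. stick V j * D j) \<le> (\<Sum>j. stick V j * D j)"
    by (rule sum_le_suminf[OF sm]) (use fn in auto)
  show "(\<Sum>j. stick V j * D j) \<le> (\<Sum>j<N. stick V j * D j) + C * (\<Prod>l<N. 1 - V l)"
    by (rule suminf_le_const[OF sm]) (use part in auto)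
qed


lemma mix_bound:
  fixes V W D :: "nat \<Rightarrow> real"
  assumes V: "\<And>l. 0 \<le> V l \<and> V l \<le> 1" and W: "\<And>l. 0 \<le> W l \<and> W l \<le> 1"
    and W0: "(\<Prod>l<N. 1 - W l) = 0" and close: "\<And>l. l < N \<Longrightarrow> \<bar>V l - W l\<bar> \<le> \<eta>"
    and D: "\<And>j. 0 \<le> D j \<and> D j \<le> C"
  shows "\<bar>(\<Sum>j. stick V j * D j) - (\<Sum>j<N. stick W j * D j)\<bar> \<le> (real N * real N * \<eta> + real N * \<eta>) * C"
proof -
  have C0: "C \<ge> 0" using D[of 0] by simp
  have sj: "\<bar>stick V j - stick W j\<bar> \<le> real N * \<eta>" if j: "j < N" for j
  proof -
    have "\<bar>stick V j - stick W j\<bar> \<le> (\<Sum>l<Suc j. \<bar>V l - W l\<bar>)" by (rule stick_lip[OF V W])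
    also have "\<dots> \<le> (\<Sum>l<Suc j. \<eta>)" using j by (intro sum_mono close) auto
    also have "\<dots> = real (Suc j) * \<eta>" by simp
    also have "\<dots> \<le> real N * \<eta>"
    proof -
      have "\<eta> \<ge> 0" using close[of 0] j by (auto intro: order_trans[OF abs_ge_zero])
      then show ?thesis using j by (intro mult_right_mono) auto
    qed
    finally show ?thesis .
  qed
  have s1: "\<bar>(\<Sum>j<N. stick V j * D j) - (\<Sum>j<N. stick W j * D j)\<bar> \<le> real N * real N * \<eta> * C"
  proof -
    have "\<bar>(\<Sum>j<N. stick V j * D j) - (\<Sum>j<N. stick W j * D j)\<bar> = \<bar>\<Sum>j<N. (stick V j - stick W j) * D j\<bar>"
      by (simp add: sum_subtractf left_diff_distrib)
    also have "\<dots> \<le> (\<Sum>j<N. \<bar>(stick V j - stick W j) * D j\<bar>)" by (rule sum_abs)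
    also have "\<dots> \<le> (\<Sum>j<N. (real N * \<eta>) * C)"
    proof (intro sum_mono)
      fix j assume "j \<in> {..<N}"
      then have "\<bar>stick V j - stick W j\<bar> \<le> real N * \<eta>" by (intro sj) auto
      then show "\<bar>(stick V j - stick W j) * D j\<bar> \<le> real N * \<eta> * C"
        using D[of j] by (simp add: abs_mult) (intro mult_mono, auto)
    qed
    also have "\<dots> = real N * real N * \<eta> * C" by simp
    finally show ?thesis .
  qed
  have s2: "(\<Prod>l<N. 1 - V l) \<le> real N * \<eta>"
  proof -
    have "\<bar>(\<Prod>l<N. 1 - V l) - (\<Prod>l<N. 1 - W l)\<bar> \<le> (\<Sum>l<N. \<bar>(1 - V l) - (1 - W l)\<bar>)"
      by (rule prod_diff_bound) (use V W in auto)
    also have "\<dots> \<le> (\<Sum>l<N. \<eta>)" by (intro sum_mono) (use close in \<open>auto simp: abs_minus_commute\<close>)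
    finally show ?thesis using W0 by simp
  qed
  have p0: "(\<Prod>l<N. 1 - V l) \<ge> 0" using prod_01[of N V] V by simp
  have b2: "(\<Sum>j<N. stick V j * D j) \<le> (\<Sum>j. stick V j * D j)" by (rule mix_summable_bounds(2)[OF V D])
  have b3: "(\<Sum>j. stick V j * D j) \<le> (\<Sum>j<N. stick V j * D j) + C * (\<Prod>l<N. 1 - V l)" by (rule mix_summable_bounds(3)[OF V D])
  have "C * (\<Prod>l<N. 1 - V l) \<le> C * (real N * \<eta>)" using s2 C0 by (intro mult_left_mono)
  then show ?thesis using b2 b3 s1 C0 p0 by (simp add: abs_le_iff algebra_simps)
qed

definition inv_stick :: "nat \<Rightarrow> (nat \<Rightarrow> real) \<Rightarrow> nat \<Rightarrow> real" where
  "inv_stick L c l = (if l < L then c l / (1 - (\<Sum>i<l. c i)) else 0)"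

lemma inv_stick_denom:
  fixes c :: "nat \<Rightarrow> real"
  assumes pos: "\<And>l. l < L \<Longrightarrow> c l > 0" and s: "(\<Sum>l<L. c l) = 1" and l: "l < L"
  shows "1 - (\<Sum>i<l. c i) = (\<Sum>i\<in>{l..<L}. c i)" and "1 - (\<Sum>i<l. c i) \<ge> c l"
proof -
  have U: "{..<L} = {..<l} \<union> {l..<L}" "{..<l} \<inter> {l..<L} = {}" using l by auto
  have "(\<Sum>l<L. c l) = (\<Sum>i<l. c i) + (\<Sum>i\<in>{l..<L}. c i)"
    unfolding U(1) by (rule sum.union_disjoint) (use U in auto)
  then show e: "1 - (\<Sum>i<l. c i) = (\<Sum>i\<in>{l..<L}. c i)" using s by simp
  have "c l \<le> (\<Sum>i\<in>{l..<L}. c i)" using l pos by (intro member_le_sum) (auto intro: less_imp_le)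
  then show "1 - (\<Sum>i<l. c i) \<ge> c l" using e by simp
qed

lemma inv_stick_props:
  fixes c :: "nat \<Rightarrow> real"
  assumes pos: "\<And>l. l < L \<Longrightarrow> c l > 0" and s: "(\<Sum>l<L. c l) = 1"
  shows "\<And>l. 0 \<le> inv_stick L c l \<and> inv_stick L c l \<le> 1"
    and "\<And>l. l < L \<Longrightarrow> stick (inv_stick L c) l = c l"
    and "(\<Prod>l<L. 1 - inv_stick L c l) = 0"
proof -
  show b: "0 \<le> inv_stick L c l \<and> inv_stick L c l \<le> 1" for l
  proof (cases "l < L")
    case True
    have "1 - (\<Sum>i<l. c i) \<ge> c l" by (rule inv_stick_denom(2)[OF pos s True])
    moreover have "c l > 0" using pos True by simp
    ultimately show ?thesis using True by (simp add: inv_stick_def divide_le_eq_1)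
  qed (simp add: inv_stick_def)
  have pr: "(\<Prod>i<l. 1 - inv_stick L c i) = 1 - (\<Sum>i<l. c i)" if "l \<le> L" for l
    using that
  proof (induction l)
    case 0 then show ?case by simp
  next
    case (Suc l)
    then have l: "l < L" by simp
    have d: "1 - (\<Sum>i<l. c i) \<ge> c l" by (rule inv_stick_denom(2)[OF pos s l])
    have dpos: "1 - (\<Sum>i<l. c i) > 0" using d pos[OF l] by linarith
    have "(\<Prod>i<Suc l. 1 - inv_stick L c i) = (1 - (\<Sum>i<l. c i)) * (1 - c l / (1 - (\<Sum>i<l. c i)))"
      using Suc l by (simp add: inv_stick_def)
    also have "\<dots> = 1 - (\<Sum>i<Suc l. c i)" using dpos by (simp add: field_simps)
    finally show ?case .
  qed
  show "stick (inv_stick L c) l = c l" if l: "l < L" for l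
  proof -
    have d: "1 - (\<Sum>i<l. c i) \<ge> c l" by (rule inv_stick_denom(2)[OF pos s l])
    have dpos: "1 - (\<Sum>i<l. c i) > 0" using d pos[OF l] by linarith
    show ?thesis unfolding stick_def pr[OF less_imp_le[OF l]] using l dpos by (simp add: inv_stick_def)
  qed
  show "(\<Prod>l<L. 1 - inv_stick L c l) = 0" using pr[of L] s by simp
qed


lemma Linf_dist_le:
  assumes "\<And>x y. x \<in> X \<Longrightarrow> y \<in> Dm \<Longrightarrow> \<bar>f x y - q x y\<bar> \<le> e"
  shows "Linf_dist X f q \<le> ereal e"
  unfolding Linf_dist_def using assms by (intro SUP_least) auto

lemma SUP_lt_pointwise:
  fixes F :: "'x \<Rightarrow> real"
  assumes "(SUP x\<in>X. ereal (F x)) < ereal e" "x \<in> X"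
  shows "F x < e"
proof -
  have "ereal (F x) \<le> (SUP x\<in>X. ereal (F x))" using assms(2) by (rule SUP_upper)
  then have "ereal (F x) < ereal e" using assms(1) by (rule le_less_trans)
  then show ?thesis by simp
qed

lemma indep_pos:
  assumes M: "prob_space M" and ind: "indep_ingredients M Fk Fw Fa"
    and EK: "EK \<in> Fk" "measure M EK > 0"
    and EW: "\<And>j. j < N \<Longrightarrow> EW j \<in> Fw j \<and> measure M (EW j) > 0"
    and EA: "\<And>j. j < N \<Longrightarrow> EA j \<in> Fa j \<and> measure M (EA j) > 0"
  shows "EK \<inter> (\<Inter>j<N. EW j) \<inter> (\<Inter>j<N. EA j) \<in> sets M \<and> measure M (EK \<inter> (\<Inter>j<N. EW j) \<inter> (\<Inter>j<N. EA j)) > 0"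
proof -
  interpret prob_space M by (rule M)
  define F where "F = (\<lambda>i. case i of IK \<Rightarrow> Fk | IW j \<Rightarrow> Fw j | IA j \<Rightarrow> Fa j)"
  define A where "A = (\<lambda>i. case i of IK \<Rightarrow> EK | IW j \<Rightarrow> EW j | IA j \<Rightarrow> EA j)"
  define J where "J = insert IK (IW ` {..<N} \<union> IA ` {..<N})"
  have isets: "indep_sets F UNIV" using ind by (simp add: indep_ingredients_def F_def)
  have fJ: "finite J" and nJ: "J \<noteq> {}" by (auto simp: J_def)
  have AJ: "\<forall>i\<in>J. A i \<in> F i" using EK EW EA by (auto simp: J_def A_def F_def)
  have Fev: "\<forall>i. F i \<subseteq> events" using isets by (simp add: indep_sets_def)
  have Aev: "\<forall>i\<in>J. A i \<in> events" using AJ Fev by blast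
  have eq: "(\<Inter>i\<in>J. A i) = EK \<inter> (\<Inter>j<N. EW j) \<inter> (\<Inter>j<N. EA j)"
  proof (intro equalityI subsetI)
    fix x assume x: "x \<in> (\<Inter>i\<in>J. A i)"
    have "x \<in> A IK" using x by (auto simp: J_def)
    moreover have "x \<in> A (IW j)" if "j < N" for j using x that by (auto simp: J_def)
    moreover have "x \<in> A (IA j)" if "j < N" for j using x that by (auto simp: J_def)
    ultimately show "x \<in> EK \<inter> (\<Inter>j<N. EW j) \<inter> (\<Inter>j<N. EA j)" by (auto simp: A_def)
  qed (auto simp: J_def A_def)
  have "prob (\<Inter>i\<in>J. A i) = (\<Prod>i\<in>J. prob (A i))"
    using isets fJ nJ AJ unfolding indep_sets_def by (auto simp: Pi_iff)
  also have "\<dots> > 0"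
  proof (rule prod_pos)
    fix i assume "i \<in> J"
    then show "prob (A i) > 0" using EK EW EA by (auto simp: J_def A_def)
  qed
  finally have "prob (\<Inter>i\<in>J. A i) > 0" .
  moreover have "(\<Inter>i\<in>J. A i) \<in> events" using fJ nJ Aev by (intro sets.finite_INT) auto
  ultimately show ?thesis unfolding eq by simp
qed


lemma caseA_det:
  fixes V :: "nat \<Rightarrow> real" and \<Theta> \<xi> :: "nat \<Rightarrow> real^'m" and c :: "nat \<Rightarrow> real" and y :: "real^'m"
  assumes V: "\<And>j. 0 \<le> V j \<and> V j \<le> 1"
    and Th: "\<And>j. \<Theta> j \<in> Dm0" and y: "y \<in> Dm"
    and bound: "\<forall>\<theta>\<in>(Dm0::(real^'m) set). \<forall>y\<in>Dm. 0 \<le> bern_dens k \<theta> y \<and> bern_dens k \<theta> y \<le> C"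
    and cpos: "\<And>l. l < L \<Longrightarrow> c l > 0" and csum: "(\<Sum>l<L. c l) = 1"
    and near: "\<And>j. j < L \<Longrightarrow> bern_dens k (\<Theta> j) = bern_dens k (\<xi> j)"
    and close: "\<And>j. j < L \<Longrightarrow> \<bar>V j - inv_stick L c j\<bar> \<le> \<eta>"
  shows "\<bar>(\<Sum>j. stick V j * bern_dens k (\<Theta> j) y) - (\<Sum>l<L. c l * bern_dens k (\<xi> l) y)\<bar>
     \<le> (real L * real L * \<eta> + real L * \<eta>) * C"
proof -
  note ip = inv_stick_props[OF cpos csum]
  have "\<bar>(\<Sum>j. stick V j * bern_dens k (\<Theta> j) y) - (\<Sum>j<L. stick (inv_stick L c) j * bern_dens k (\<Theta> j) y)\<bar>
     \<le> (real L * real L * \<eta> + real L * \<eta>) * C"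
    by (rule mix_bound[OF V ip(1) ip(3) close]) (use bound Th y in auto)
  moreover have "(\<Sum>j<L. stick (inv_stick L c) j * bern_dens k (\<Theta> j) y) = (\<Sum>l<L. c l * bern_dens k (\<xi> l) y)"
    by (intro sum.cong refl) (simp add: ip(2) near)
  ultimately show ?thesis by simp
qed

lemma inv_stick_cont:
  fixes c :: "nat \<Rightarrow> 'x::topological_space \<Rightarrow> real"
  assumes cc: "\<And>l. l < L \<Longrightarrow> continuous_on X (c l)" and cpos: "\<And>l x. l < L \<Longrightarrow> x \<in> X \<Longrightarrow> c l x > 0"
    and cs: "\<And>x. x \<in> X \<Longrightarrow> (\<Sum>l<L. c l x) = 1"
  shows "continuous_on X (\<lambda>x. inv_stick L (\<lambda>l. c l x) j)"
proof (cases "j < L")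
  case True
  have d: "1 - (\<Sum>i<j. c i x) \<noteq> 0" if x: "x \<in> X" for x
  proof -
    have "1 - (\<Sum>i<j. c i x) \<ge> c j x"
      by (rule inv_stick_denom(2)[where L=L]) (use cpos x cs True in auto)
    then show ?thesis using cpos[OF True x] by simp
  qed
  have "continuous_on X (\<lambda>x. c j x / (1 - (\<Sum>i<j. c i x)))"
  proof -
    have d2: "(\<Sum>i<j. c i x) \<noteq> 1" if "x \<in> X" for x using d[OF that] by simp
    show ?thesis by (intro continuous_intros cc) (use d2 True in auto)
  qed
  then show ?thesis using True by (simp add: inv_stick_def)
qed (simp add: inv_stick_def)


lemma EK_event:
  assumes "n \<ge> 1" "cond_iii M kf"
  shows "{\<omega>\<in>space M. kf \<omega> = n} \<in> nat_sigma M kf \<and> measure M {\<omega>\<in>space M. kf \<omega> = n} > 0"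
proof
  have "kf -` {n} \<inter> space M \<in> sets (vimage_algebra (space M) kf (count_space UNIV))"
    by (rule in_vimage_algebra) simp
  moreover have "kf -` {n} \<inter> space M = {\<omega>\<in>space M. kf \<omega> = n}" by auto
  ultimately show "{\<omega>\<in>space M. kf \<omega> = n} \<in> nat_sigma M kf" by (simp add: nat_sigma_def)
  show "measure M {\<omega>\<in>space M. kf \<omega> = n} > 0" using assms by (simp add: cond_iii_def)
qed

lemma caseA_generic:
  fixes M :: "'a measure" and X :: "'x::metric_space set" and q :: "'x \<Rightarrow> real^'m \<Rightarrow> real"
    and kf :: "'a \<Rightarrow> nat" and Vf :: "nat \<Rightarrow> 'a \<Rightarrow> 'x \<Rightarrow> real" and \<Theta>f :: "nat \<Rightarrow> 'a \<Rightarrow> 'x \<Rightarrow> real^'m"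
  assumes M: "prob_space M" and X: "compact X" and q: "q \<in> Dtilde X" and \<epsilon>: "\<epsilon> > 0"
    and ind: "indep_ingredients M (nat_sigma M kf) Fw Fa"
    and kpos: "cond_iii M kf"
    and Vr: "\<And>\<omega> j x. \<omega> \<in> space M \<Longrightarrow> x \<in> X \<Longrightarrow> 0 \<le> Vf j \<omega> x \<and> Vf j \<omega> x \<le> 1"
    and Tr: "\<And>\<omega> j x. \<omega> \<in> space M \<Longrightarrow> x \<in> X \<Longrightarrow> \<Theta>f j \<omega> x \<in> Dm0"
    and Wa: "\<And>j g e. continuous_on X g \<Longrightarrow> g ` X \<subseteq> {0..1} \<Longrightarrow> e > 0 \<Longrightarrow>
              \<exists>E\<in>Fw j. measure M E > 0 \<and> E \<subseteq> {\<omega>\<in>space M. \<forall>x\<in>X. \<bar>Vf j \<omega> x - g x\<bar> < e}"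
    and Aa: "\<And>j \<xi> r. \<xi> \<in> Dm0 \<Longrightarrow> r > 0 \<Longrightarrow>
              \<exists>E\<in>Fa j. measure M E > 0 \<and> E \<subseteq> {\<omega>\<in>space M. \<forall>x\<in>X. dist (\<Theta>f j \<omega> x) \<xi> < r}"
  shows "pos_prob_in M (sets M) {\<omega>\<in>space M. Linf_dist X (mix_dens (kf \<omega>) (\<lambda>j x. Vf j \<omega> x) (\<lambda>j x. \<Theta>f j \<omega> x)) q < ereal \<epsilon>}"
proof -
  have \<epsilon>2: "\<epsilon> / 2 > 0" using \<epsilon> by simp
  from key[OF q X \<epsilon>2] obtain k0 L \<xi> c r C where k0: "k0 \<ge> 1" and L1: "(L::nat) \<ge> 1" and r: "r > 0"
    and \<xi>D: "\<forall>l<L. \<xi> l \<in> Dm0"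
    and near: "\<forall>l<L. \<forall>\<theta>. dist \<theta> (\<xi> l) < r \<longrightarrow> bern_dens k0 \<theta> = bern_dens k0 (\<xi> l)"
    and bound: "\<forall>\<theta>\<in>(Dm0::(real^'m) set). \<forall>y\<in>Dm. 0 \<le> bern_dens k0 \<theta> y \<and> bern_dens k0 \<theta> y \<le> C"
    and cc: "\<forall>l<L. continuous_on X (c l) \<and> (\<forall>x\<in>X. c l x > 0)"
    and cs: "\<forall>x\<in>X. (\<Sum>l<L. c l x) = 1"
    and ce: "\<forall>x\<in>X. \<forall>y\<in>Dm. \<bar>(\<Sum>l<L. c l x * bern_dens k0 (\<xi> l) y) - q x y\<bar> < \<epsilon> / 2"
    by (elim exE conjE) (rule that; assumption)
  have C0: "C \<ge> 0"
  proof -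
    have z: "(0::real^'m) \<in> Dm" by (simp add: Dm_def)
    have x0: "\<xi> 0 \<in> Dm0" using \<xi>D L1 by auto
    have "0 \<le> bern_dens k0 (\<xi> 0) 0 \<and> bern_dens k0 (\<xi> 0) 0 \<le> C"
      using bound x0 z by blast
    then show ?thesis by linarith
  qed
  define P where "P = real L * real L + real L"
  define \<eta>0 where "\<eta>0 = \<epsilon> / (4 * (C + 1)) / P"
  have LL: "P > 0" unfolding P_def by (intro add_pos_pos mult_pos_pos) (use L1 in auto)
  have \<eta>0: "\<eta>0 > 0" using \<epsilon> LL C0 unfolding \<eta>0_def by (intro divide_pos_pos) auto
  have errA: "(real L * real L * \<eta>0 + real L * \<eta>0) * C \<le> \<epsilon> / 4"
  proof -
    have e1: "(real L * real L * \<eta>0 + real L * \<eta>0) = P * \<eta>0"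
      by (simp add: algebra_simps P_def)
    have e2: "P * \<eta>0 = \<epsilon> / (4 * (C + 1))"
      using LL unfolding \<eta>0_def by simp
    have "(real L * real L * \<eta>0 + real L * \<eta>0) * C = \<epsilon> / 4 * (C / (C + 1))"
      unfolding e1 e2 using C0 by (simp add: field_simps)
    also have "\<dots> \<le> \<epsilon> / 4 * 1" using \<epsilon> C0 by (intro mult_left_mono) (auto simp: divide_le_eq_1)
    finally show ?thesis by simp
  qed
  define Vs where "Vs = (\<lambda>j x. inv_stick L (\<lambda>l. c l x) j)"
  have Vs_cont: "continuous_on X (Vs j)" for j
    unfolding Vs_def by (rule inv_stick_cont) (use cc cs in auto)
  have Vs_range: "Vs j ` X \<subseteq> {0..1}" for j
  proof
    fix u assume "u \<in> Vs j ` X"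
    then obtain x where x: "x \<in> X" and u: "u = Vs j x" by auto
    have "0 \<le> inv_stick L (\<lambda>l. c l x) j \<and> inv_stick L (\<lambda>l. c l x) j \<le> 1"
      by (rule inv_stick_props(1)) (use cc cs x in auto)
    then show "u \<in> {0..1}" by (simp add: u Vs_def)
  qed
  have exW: "\<forall>j. \<exists>E. E \<in> Fw j \<and> measure M E > 0 \<and> E \<subseteq> {\<omega>\<in>space M. \<forall>x\<in>X. \<bar>Vf j \<omega> x - Vs j x\<bar> < \<eta>0}"
  proof
    fix j
    from Wa[OF Vs_cont[of j] Vs_range[of j] \<eta>0]
    show "\<exists>E. E \<in> Fw j \<and> measure M E > 0 \<and> E \<subseteq> {\<omega>\<in>space M. \<forall>x\<in>X. \<bar>Vf j \<omega> x - Vs j x\<bar> < \<eta>0}"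
      by (simp only: Bex_def)
  qed
  obtain EW where EW: "\<forall>j. EW j \<in> Fw j \<and> measure M (EW j) > 0 \<and> EW j \<subseteq> {\<omega>\<in>space M. \<forall>x\<in>X. \<bar>Vf j \<omega> x - Vs j x\<bar> < \<eta>0}"
    using choice[OF exW] by (elim exE) (erule that)
  have exA: "\<forall>j. \<exists>E. j < L \<longrightarrow> E \<in> Fa j \<and> measure M E > 0 \<and> E \<subseteq> {\<omega>\<in>space M. \<forall>x\<in>X. dist (\<Theta>f j \<omega> x) (\<xi> j) < r}"
  proof
    fix j
    show "\<exists>E. j < L \<longrightarrow> E \<in> Fa j \<and> measure M E > 0 \<and> E \<subseteq> {\<omega>\<in>space M. \<forall>x\<in>X. dist (\<Theta>f j \<omega> x) (\<xi> j) < r}"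
    proof (cases "j < L")
      case True
      then have "\<xi> j \<in> Dm0" using \<xi>D by simp
      from Aa[OF this r] show ?thesis by (simp only: Bex_def) (use True in simp)
    qed simp
  qed
  obtain EA where EA: "\<forall>j. j < L \<longrightarrow> EA j \<in> Fa j \<and> measure M (EA j) > 0 \<and> EA j \<subseteq> {\<omega>\<in>space M. \<forall>x\<in>X. dist (\<Theta>f j \<omega> x) (\<xi> j) < r}"
    using choice[OF exA] by (elim exE) (erule that)
  define EK where "EK = {\<omega>\<in>space M. kf \<omega> = k0}"
  have EK: "EK \<in> nat_sigma M kf" "measure M EK > 0" using EK_event[OF k0 kpos] by (simp_all add: EK_def)
  define A where "A = EK \<inter> (\<Inter>j<L. EW j) \<inter> (\<Inter>j<L. EA j)"
  have A: "A \<in> sets M \<and> measure M A > 0"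
    unfolding A_def by (rule indep_pos[OF M ind EK]) (use EW EA in auto)
  have sub: "A \<subseteq> {\<omega>\<in>space M. Linf_dist X (mix_dens (kf \<omega>) (\<lambda>j x. Vf j \<omega> x) (\<lambda>j x. \<Theta>f j \<omega> x)) q < ereal \<epsilon>}"
  proof
    fix \<omega> assume \<omega>: "\<omega> \<in> A"
    then have sp: "\<omega> \<in> space M" and kw: "kf \<omega> = k0" by (auto simp: A_def EK_def)
    have wc: "\<bar>Vf j \<omega> x - Vs j x\<bar> < \<eta>0" if "j < L" "x \<in> X" for j x
      using \<omega> spec[OF EW, of j] that by (auto simp: A_def)
    have ac: "dist (\<Theta>f j \<omega> x) (\<xi> j) < r" if "j < L" "x \<in> X" for j x
      using \<omega> spec[OF EA, of j] that by (auto simp: A_def)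
    have pw: "\<bar>mix_dens (kf \<omega>) (\<lambda>j x. Vf j \<omega> x) (\<lambda>j x. \<Theta>f j \<omega> x) x y - q x y\<bar> \<le> 3 * \<epsilon> / 4"
      if x: "x \<in> X" and y: "y \<in> Dm" for x y
    proof -
      have d1: "\<bar>(\<Sum>j. stick (\<lambda>l. Vf l \<omega> x) j * bern_dens k0 (\<Theta>f j \<omega> x) y) - (\<Sum>l<L. c l x * bern_dens k0 (\<xi> l) y)\<bar>
          \<le> (real L * real L * \<eta>0 + real L * \<eta>0) * C"
      proof (rule caseA_det[where \<Theta>="\<lambda>j. \<Theta>f j \<omega> x"])
        show "0 \<le> Vf j \<omega> x \<and> Vf j \<omega> x \<le> 1" for j using Vr sp x by blast
        show "\<Theta>f j \<omega> x \<in> Dm0" for j using Tr sp x by blast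
        show "y \<in> Dm" by (rule y)
        show "\<forall>\<theta>\<in>(Dm0::(real^'m) set). \<forall>y\<in>Dm. 0 \<le> bern_dens k0 \<theta> y \<and> bern_dens k0 \<theta> y \<le> C" by (rule bound)
        show "c l x > 0" if "l < L" for l using cc that x by blast
        show "(\<Sum>l<L. c l x) = 1" using cs x by blast
        show "bern_dens k0 (\<Theta>f j \<omega> x) = bern_dens k0 (\<xi> j)" if "j < L" for j
          using near that ac[OF that x] by blast
        show "\<bar>Vf j \<omega> x - inv_stick L (\<lambda>l. c l x) j\<bar> \<le> \<eta>0" if "j < L" for j
          using wc[OF that x] by (simp add: Vs_def)
      qed
      have d2: "\<bar>(\<Sum>l<L. c l x * bern_dens k0 (\<xi> l) y) - q x y\<bar> < \<epsilon> / 2" using ce x y by blast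
      have "mix_dens (kf \<omega>) (\<lambda>j x. Vf j \<omega> x) (\<lambda>j x. \<Theta>f j \<omega> x) x y
          = (\<Sum>j. stick (\<lambda>l. Vf l \<omega> x) j * bern_dens k0 (\<Theta>f j \<omega> x) y)"
        by (simp add: mix_dens_def kw)
      then show ?thesis using d1 d2 errA by linarith
    qed
    have "Linf_dist X (mix_dens (kf \<omega>) (\<lambda>j x. Vf j \<omega> x) (\<lambda>j x. \<Theta>f j \<omega> x)) q \<le> ereal (3 * \<epsilon> / 4)"
      by (rule Linf_dist_le) (rule pw)
    also have "\<dots> < ereal \<epsilon>" using \<epsilon> by simp
    finally show "\<omega> \<in> {\<omega>\<in>space M. Linf_dist X (mix_dens (kf \<omega>) (\<lambda>j x. Vf j \<omega> x) (\<lambda>j x. \<Theta>f j \<omega> x)) q < ereal \<epsilon>}"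
      using sp by simp
  qed
  show ?thesis unfolding pos_prob_in_def using A sub by blast
qed


lemma pos_prob_sub:
  assumes "pos_prob_in M F E" "E \<subseteq> E'"
  shows "\<exists>A\<in>F. measure M A > 0 \<and> A \<subseteq> E'"
  using assms unfolding pos_prob_in_def by blast

lemma dmbpp_case:
  fixes M :: "'a measure" and X :: "'x::metric_space set" and q :: "'x \<Rightarrow> real^'m \<Rightarrow> real"
    and k :: "'a \<Rightarrow> nat" and \<eta> :: "nat \<Rightarrow> 'a \<Rightarrow> 'x \<Rightarrow> real" and z :: "nat \<Rightarrow> 'a \<Rightarrow> 'x \<Rightarrow> real^'m"
    and v :: "'x \<Rightarrow> real \<Rightarrow> real" and h :: "'x \<Rightarrow> real^'m \<Rightarrow> real^'m"
  assumes M: "prob_space M" and X: "compact X" and q: "q \<in> Dtilde X"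
    and vf: "V_family X v" and hf: "H_family X h"
    and ind: "indep_ingredients M (nat_sigma M k) (\<lambda>j. proc_sigma M X (\<eta> j)) (\<lambda>j. proc_sigma M X (z j))"
    and ci: "cond_i M X z h" and cii: "cond_ii M X \<eta> v" and ciii: "cond_iii M k"
  shows "in_Linf_support M X (\<lambda>\<omega>. mix_dens (k \<omega>) (\<lambda>j x. v x (\<eta> j \<omega> x)) (\<lambda>j x. h x (z j \<omega> x))) q"
  unfolding in_Linf_support_def
proof (intro allI impI)
  fix \<epsilon> :: real assume \<epsilon>: "\<epsilon> > 0"
  show "pos_prob_in M (sets M) {\<omega>\<in>space M. Linf_dist X (mix_dens (k \<omega>) (\<lambda>j x. v x (\<eta> j \<omega> x)) (\<lambda>j x. h x (z j \<omega> x))) q < ereal \<epsilon>}"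
  proof (rule caseA_generic[OF M X q \<epsilon> ind ciii, where Vf="\<lambda>j \<omega> x. v x (\<eta> j \<omega> x)" and \<Theta>f="\<lambda>j \<omega> x. h x (z j \<omega> x)"])
    fix \<omega> j x
    have "v x (\<eta> j \<omega> x) \<in> {0..1}" using vf rangeI unfolding V_family_def by blast
    then show "0 \<le> v x (\<eta> j \<omega> x) \<and> v x (\<eta> j \<omega> x) \<le> 1" by simp
    show "h x (z j \<omega> x) \<in> Dm0" using hf rangeI unfolding H_family_def by blast
  next
    fix j and g :: "'x \<Rightarrow> real" and e :: real assume g: "continuous_on X g" "g ` X \<subseteq> {0..1}" and e: "e > 0"
    have pp: "pos_prob_in M (proc_sigma M X (\<eta> j)) {\<omega>\<in>space M. (SUP x\<in>X. ereal \<bar>v x (\<eta> j \<omega> x) - g x\<bar>) < ereal e}"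
      using cii e g unfolding cond_ii_def by blast
    have "{\<omega>\<in>space M. (SUP x\<in>X. ereal \<bar>v x (\<eta> j \<omega> x) - g x\<bar>) < ereal e} \<subseteq> {\<omega>\<in>space M. \<forall>x\<in>X. \<bar>v x (\<eta> j \<omega> x) - g x\<bar> < e}"
    proof (intro subsetI)
      fix \<omega> assume "\<omega> \<in> {\<omega>\<in>space M. (SUP x\<in>X. ereal \<bar>v x (\<eta> j \<omega> x) - g x\<bar>) < ereal e}"
      then show "\<omega> \<in> {\<omega>\<in>space M. \<forall>x\<in>X. \<bar>v x (\<eta> j \<omega> x) - g x\<bar> < e}"
        using SUP_lt_pointwise[where F="\<lambda>x. \<bar>v x (\<eta> j \<omega> x) - g x\<bar>"] by auto
    qed
    from pos_prob_sub[OF pp this]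
    show "\<exists>E\<in>proc_sigma M X (\<eta> j). measure M E > 0 \<and> E \<subseteq> {\<omega>\<in>space M. \<forall>x\<in>X. \<bar>v x (\<eta> j \<omega> x) - g x\<bar> < e}" .
  next
    fix j and \<xi> :: "real^'m" and r :: real assume \<xi>: "\<xi> \<in> Dm0" and r: "r > 0"
    have g: "continuous_on X (\<lambda>x. \<xi>)" "(\<lambda>x. \<xi>) ` X \<subseteq> Dm0" using \<xi> by auto
    have pp: "pos_prob_in M (proc_sigma M X (z j)) {\<omega>\<in>space M. (SUP x\<in>X. ereal (norm (h x (z j \<omega> x) - \<xi>))) < ereal r}"
      using ci r g unfolding cond_i_def by blast
    have "{\<omega>\<in>space M. (SUP x\<in>X. ereal (norm (h x (z j \<omega> x) - \<xi>))) < ereal r} \<subseteq> {\<omega>\<in>space M. \<forall>x\<in>X. dist (h x (z j \<omega> x)) \<xi> < r}"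
      using SUP_lt_pointwise[where F="\<lambda>x. norm (h x (z j _ x) - \<xi>)"] by (auto simp: dist_norm)
    from pos_prob_sub[OF pp this]
    show "\<exists>E\<in>proc_sigma M X (z j). measure M E > 0 \<and> E \<subseteq> {\<omega>\<in>space M. \<forall>x\<in>X. dist (h x (z j \<omega> x)) \<xi> < r}" .
  qed
qed

lemma theta_case:
  fixes M :: "'a measure" and X :: "'x::metric_space set" and q :: "'x \<Rightarrow> real^'m \<Rightarrow> real"
    and k :: "'a \<Rightarrow> nat" and \<eta> :: "nat \<Rightarrow> 'a \<Rightarrow> 'x \<Rightarrow> real" and \<theta> :: "nat \<Rightarrow> 'a \<Rightarrow> real^'m"
    and v :: "'x \<Rightarrow> real \<Rightarrow> real"
  assumes M: "prob_space M" and X: "compact X" and q: "q \<in> Dtilde X"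
    and th: "iid_rvs M Dm0 \<theta>" and vf: "V_family X v"
    and ind: "indep_ingredients M (nat_sigma M k) (\<lambda>j. proc_sigma M X (\<eta> j)) (\<lambda>j. rv_sigma M (\<theta> j))"
    and cii: "cond_ii M X \<eta> v" and ciii: "cond_iii M k" and fs: "\<forall>j. full_support M Dm0 (\<theta> j)"
  shows "in_Linf_support M X (\<lambda>\<omega>. mix_dens (k \<omega>) (\<lambda>j x. v x (\<eta> j \<omega> x)) (\<lambda>j x. \<theta> j \<omega>)) q"
  unfolding in_Linf_support_def
proof (intro allI impI)
  fix \<epsilon> :: real assume \<epsilon>: "\<epsilon> > 0"
  show "pos_prob_in M (sets M) {\<omega>\<in>space M. Linf_dist X (mix_dens (k \<omega>) (\<lambda>j x. v x (\<eta> j \<omega> x)) (\<lambda>j x. \<theta> j \<omega>)) q < ereal \<epsilon>}"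
  proof (rule caseA_generic[OF M X q \<epsilon> ind ciii, where Vf="\<lambda>j \<omega> x. v x (\<eta> j \<omega> x)" and \<Theta>f="\<lambda>j \<omega> x. \<theta> j \<omega>"])
    fix \<omega> j x
    have "v x (\<eta> j \<omega> x) \<in> {0..1}" using vf rangeI unfolding V_family_def by blast
    then show "0 \<le> v x (\<eta> j \<omega> x) \<and> v x (\<eta> j \<omega> x) \<le> 1" by simp
    assume "\<omega> \<in> space M"
    then show "\<theta> j \<omega> \<in> Dm0" using th by (auto simp: iid_rvs_def)
  next
    fix j and g :: "'x \<Rightarrow> real" and e :: real assume g: "continuous_on X g" "g ` X \<subseteq> {0..1}" and e: "e > 0"
    have pp: "pos_prob_in M (proc_sigma M X (\<eta> j)) {\<omega>\<in>space M. (SUP x\<in>X. ereal \<bar>v x (\<eta> j \<omega> x) - g x\<bar>) < ereal e}"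
      using cii e g unfolding cond_ii_def by blast
    have "{\<omega>\<in>space M. (SUP x\<in>X. ereal \<bar>v x (\<eta> j \<omega> x) - g x\<bar>) < ereal e} \<subseteq> {\<omega>\<in>space M. \<forall>x\<in>X. \<bar>v x (\<eta> j \<omega> x) - g x\<bar> < e}"
    proof (intro subsetI)
      fix \<omega> assume "\<omega> \<in> {\<omega>\<in>space M. (SUP x\<in>X. ereal \<bar>v x (\<eta> j \<omega> x) - g x\<bar>) < ereal e}"
      then show "\<omega> \<in> {\<omega>\<in>space M. \<forall>x\<in>X. \<bar>v x (\<eta> j \<omega> x) - g x\<bar> < e}"
        using SUP_lt_pointwise[where F="\<lambda>x. \<bar>v x (\<eta> j \<omega> x) - g x\<bar>"] by auto
    qed
    from pos_prob_sub[OF pp this]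
    show "\<exists>E\<in>proc_sigma M X (\<eta> j). measure M E > 0 \<and> E \<subseteq> {\<omega>\<in>space M. \<forall>x\<in>X. \<bar>v x (\<eta> j \<omega> x) - g x\<bar> < e}" .
  next
    fix j and \<xi> :: "real^'m" and r :: real assume \<xi>: "\<xi> \<in> Dm0" and r: "r > 0"
    define E where "E = {\<omega>\<in>space M. \<theta> j \<omega> \<in> ball \<xi> r}"
    have "\<theta> j -` ball \<xi> r \<inter> space M \<in> sets (vimage_algebra (space M) (\<theta> j) borel)"
      by (rule in_vimage_algebra) simp
    moreover have "\<theta> j -` ball \<xi> r \<inter> space M = E" by (auto simp: E_def)
    ultimately have E1: "E \<in> rv_sigma M (\<theta> j)" by (simp add: rv_sigma_def)
    have "ball \<xi> r \<inter> Dm0 \<noteq> {}" using \<xi> r centre_in_ball[of \<xi> r] by blast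
    then have E2: "measure M E > 0" using fs unfolding full_support_def E_def by blast
    have E3: "E \<subseteq> {\<omega>\<in>space M. \<forall>x\<in>X. dist (\<theta> j \<omega>) \<xi> < r}" by (auto simp: E_def dist_commute)
    show "\<exists>E\<in>rv_sigma M (\<theta> j). measure M E > 0 \<and> E \<subseteq> {\<omega>\<in>space M. \<forall>x\<in>X. dist (\<theta> j \<omega>) \<xi> < r}"
      using E1 E2 E3 by blast
  qed
qed




lemma count_ints:
  fixes a b :: int
  assumes "0 \<le> a"
  shows "real (card {j::nat. a \<le> int j \<and> int j \<le> b}) = max 0 (real_of_int (b - a + 1))"
proof (cases "a \<le> b")
  case True
  have "{j::nat. a \<le> int j \<and> int j \<le> b} = {nat a..nat b}"
    using assms True by (auto simp: le_nat_iff nat_le_iff)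
  then show ?thesis using assms True by simp
next
  case False
  then have e: "{j::nat. a \<le> int j \<and> int j \<le> b} = {}" by auto
  show ?thesis using False by (simp add: e)
qed

lemma count_grid:
  fixes \<alpha> \<beta> :: real
  assumes N: "N \<ge> 1" and a: "0 \<le> \<alpha>" and b: "\<beta> \<le> 1"
  defines "S \<equiv> {j. j < N \<and> \<alpha> \<le> (real j + 1/2) / real N \<and> (real j + 1/2) / real N \<le> \<beta>}"
  shows "real (card S) \<ge> real N * (\<beta> - \<alpha>) - 1" and "real (card S) \<le> max 0 (real N * (\<beta> - \<alpha>) + 1)"
proof -
  have Np: "real N > 0" using N by simp
  define a0 where "a0 = \<lceil>real N * \<alpha> - 1/2\<rceil>"
  define b0 where "b0 = \<lfloor>real N * \<beta> - 1/2\<rfloor>"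
  have ab2: "real_of_int a0 \<ge> real N * \<alpha> - 1/2" unfolding a0_def by linarith
  have "real N * \<alpha> \<ge> 0" using a Np by simp
  then have "real_of_int a0 > -1" using ab2 by linarith
  then have a00: "0 \<le> a0" by simp
  have bN: "b0 \<le> int N - 1"
  proof -
    have "real N * \<beta> - 1/2 \<le> real N - 1/2" using b Np by (simp add: mult_left_le)
    then have "b0 \<le> \<lfloor>real N - 1/2\<rfloor>" unfolding b0_def by (intro floor_mono)
    also have "\<lfloor>real N - 1/2\<rfloor> = int N - 1" by (simp add: floor_eq_iff)
    finally show ?thesis .
  qed
  have Seq: "S = {j::nat. a0 \<le> int j \<and> int j \<le> b0}"
  proof -
    have "\<alpha> \<le> (real j + 1/2) / real N \<longleftrightarrow> a0 \<le> int j" for j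
      using Np unfolding a0_def by (simp add: ceiling_le_iff pos_le_divide_eq algebra_simps)
    moreover have "(real j + 1/2) / real N \<le> \<beta> \<longleftrightarrow> int j \<le> b0" for j
      using Np unfolding b0_def by (simp add: le_floor_iff pos_divide_le_eq algebra_simps)
    moreover have "int j \<le> b0 \<Longrightarrow> j < N" for j using bN by simp
    ultimately show ?thesis unfolding S_def by auto
  qed
  have c: "real (card S) = max 0 (real_of_int (b0 - a0 + 1))" unfolding Seq by (rule count_ints[OF a00])
  have ab1: "real_of_int a0 < real N * \<alpha> - 1/2 + 1" unfolding a0_def by linarith
  have bb1: "real_of_int b0 > real N * \<beta> - 1/2 - 1" unfolding b0_def by linarith
  have bb2: "real_of_int b0 \<le> real N * \<beta> - 1/2" unfolding b0_def by linarith
  show "real (card S) \<ge> real N * (\<beta> - \<alpha>) - 1" unfolding c using ab1 bb1 by (simp add: algebra_simps)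
  show "real (card S) \<le> max 0 (real N * (\<beta> - \<alpha>) + 1)" unfolding c using ab2 bb2
    by (simp add: algebra_simps)
qed


lemma disc_bound:
  fixes c D\<xi> D :: "nat \<Rightarrow> real"
  assumes L1: "L \<ge> 1" and N1: "N \<ge> 1" and \<delta>: "\<delta> > 0"
    and cpos: "\<And>l. l < L \<Longrightarrow> c l > 0" and csum: "(\<Sum>l<L. c l) = 1"
    and D\<xi>b: "\<And>l. l < L \<Longrightarrow> 0 \<le> D\<xi> l \<and> D\<xi> l \<le> C"
    and Db: "\<And>j. j < N \<Longrightarrow> 0 \<le> D j \<and> D j \<le> C"
    and settled: "\<And>j l. j < N \<Longrightarrow> l < L \<Longrightarrow> (\<Sum>i<l. c i) + \<delta> \<le> (real j + 1/2) / real N \<Longrightarrow>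
        (real j + 1/2) / real N \<le> (\<Sum>i<Suc l. c i) \<Longrightarrow> D j = D\<xi> l"
  shows "\<bar>(\<Sum>j<N. D j / real N) - (\<Sum>l<L. c l * D\<xi> l)\<bar> \<le> 2 * real L * (\<delta> + 1 / real N) * C"
proof -
  define cum where "cum = (\<lambda>l. \<Sum>i<l. c i)"
  define sp where "sp = (\<lambda>j::nat. (real j + 1/2) / real N)"
  have Np: "real N > 0" using N1 by simp
  have C0: "C \<ge> 0" using D\<xi>b[of 0] L1 by simp
  have cnn: "\<And>l. l < L \<Longrightarrow> c l \<ge> 0" using cpos by (simp add: less_imp_le)
  have cum_mono: "cum l \<le> cum l'" if "l \<le> l'" "l' \<le> L" for l l'
    unfolding cum_def using that cnn by (intro sum_mono2) auto
  have cum0: "cum l \<ge> 0" if "l \<le> L" for l using cum_mono[of 0 l] that by (simp add: cum_def)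
  have cum1: "cum l \<le> 1" if "l \<le> L" for l using cum_mono[of l L] that csum by (simp add: cum_def)
  have cumS: "cum (Suc l) = cum l + c l" for l by (simp add: cum_def)
  define S where "S = (\<lambda>l. {j. j < N \<and> cum l + \<delta> \<le> sp j \<and> sp j \<le> cum (Suc l)})"
  have fS: "finite (S l)" for l by (simp add: S_def)
  have SN: "S l \<subseteq> {..<N}" for l by (auto simp: S_def)
  have cardS: "\<bar>real (card (S l)) / real N - c l\<bar> \<le> \<delta> + 1 / real N" if l: "l < L" for l
  proof -
    have a: "0 \<le> cum l + \<delta>" using cum0[of l] l \<delta> by simp
    have b: "cum (Suc l) \<le> 1" using cum1[of "Suc l"] l by simp
    have e: "S l = {j. j < N \<and> cum l + \<delta> \<le> (real j + 1/2) / real N \<and> (real j + 1/2) / real N \<le> cum (Suc l)}"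
      by (simp add: S_def sp_def)
    note cg = count_grid[OF N1 a b]
    have lo0: "real N * (cum (Suc l) - (cum l + \<delta>)) - 1 \<le> real (card (S l))" using cg(1) unfolding e[symmetric] .
    have hi0: "real (card (S l)) \<le> max 0 (real N * (cum (Suc l) - (cum l + \<delta>)) + 1)" using cg(2) unfolding e[symmetric] .
    have cd: "cum (Suc l) - (cum l + \<delta>) = c l - \<delta>" by (simp add: cumS)
    have lo: "real (card (S l)) \<ge> real N * (c l - \<delta>) - 1" using lo0 unfolding cd .
    have hi: "real (card (S l)) \<le> max 0 (real N * (c l - \<delta>) + 1)" using hi0 unfolding cd .
    have hi2: "real (card (S l)) \<le> real N * c l + 1"
    proof -
      have "real N * (c l - \<delta>) + 1 \<le> real N * c l + 1" using Np \<delta> by (simp add: algebra_simps)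
      moreover have "0 \<le> real N * c l + 1" using Np cnn[OF l] by simp
      ultimately show ?thesis using hi by linarith
    qed
    have "real (card (S l)) / real N \<ge> c l - \<delta> - 1 / real N"
    proof -
      have "(real N * (c l - \<delta>) - 1) / real N \<le> real (card (S l)) / real N" using lo Np by (intro divide_right_mono) auto
      moreover have "(real N * (c l - \<delta>) - 1) / real N = c l - \<delta> - 1 / real N" using Np by (simp add: field_simps)
      ultimately show ?thesis by simp
    qed
    moreover have "real (card (S l)) / real N \<le> c l + 1 / real N"
    proof -
      have "real (card (S l)) / real N \<le> (real N * c l + 1) / real N" using hi2 Np by (intro divide_right_mono) auto
      also have "\<dots> = c l + 1 / real N" using Np by (simp add: field_simps)
      finally show ?thesis .
    qed
    ultimately show ?thesis using \<delta> by (simp add: abs_le_iff)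
  qed
  have lowS: "real (card (S l)) / real N \<ge> c l - (\<delta> + 1 / real N)" if "l < L" for l
    using cardS[OF that] by (simp add: abs_le_iff)
  have disj: "S l \<inter> S l' = {}" if "l < l'" "l' < L" for l l'
  proof -
    have "cum (Suc l) \<le> cum l'" using that by (intro cum_mono) auto
    then show ?thesis using \<delta> by (auto simp: S_def)
  qed
  have disj': "S l \<inter> S l' = {}" if "l \<in> {..<L}" "l' \<in> {..<L}" "l \<noteq> l'" for l l'
    using disj[of l l'] disj[of l' l] that by (cases "l < l'") (auto simp: Int_commute)
  define U where "U = {..<N} - (\<Union>l<L. S l)"
  have UU: "{..<N} = (\<Union>l<L. S l) \<union> U" "(\<Union>l<L. S l) \<inter> U = {}" using SN by (auto simp: U_def)
  have fU: "finite U" by (simp add: U_def)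
  have sumD: "(\<Sum>j<N. D j) = (\<Sum>l<L. real (card (S l)) * D\<xi> l) + (\<Sum>j\<in>U. D j)"
  proof -
    have "(\<Sum>j<N. D j) = (\<Sum>j\<in>(\<Union>l<L. S l). D j) + (\<Sum>j\<in>U. D j)"
      by (subst UU(1), rule sum.union_disjoint) (use fS fU UU(2) in auto)
    also have "(\<Sum>j\<in>(\<Union>l<L. S l). D j) = (\<Sum>l<L. \<Sum>j\<in>S l. D j)"
      by (rule sum.UNION_disjoint) (use fS disj' in auto)
    also have "\<dots> = (\<Sum>l<L. real (card (S l)) * D\<xi> l)"
    proof (intro sum.cong refl)
      fix l assume l: "l \<in> {..<L}"
      have "(\<Sum>j\<in>S l. D j) = (\<Sum>j\<in>S l. D\<xi> l)"
        by (intro sum.cong refl settled) (use l in \<open>auto simp: S_def sp_def cum_def\<close>)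
      then show "(\<Sum>j\<in>S l. D j) = real (card (S l)) * D\<xi> l" by simp
    qed
    finally show ?thesis .
  qed
  have cardU: "real (card U) = real N - (\<Sum>l<L. real (card (S l)))"
  proof -
    have "card {..<N} = card (\<Union>l<L. S l) + card U"
      by (subst UU(1), rule card_Un_disjoint) (use fS fU UU(2) in auto)
    moreover have "card (\<Union>l<L. S l) = (\<Sum>l<L. card (S l))"
      by (rule card_UN_disjoint) (use fS disj' in auto)
    ultimately show ?thesis by simp
  qed
  have cardU2: "real (card U) / real N \<le> real L * (\<delta> + 1 / real N)"
  proof -
    have "real (card U) / real N = 1 - (\<Sum>l<L. real (card (S l)) / real N)"
    proof -
      have "(\<Sum>l<L. real (card (S l)) / real N) = (\<Sum>l<L. real (card (S l))) / real N"
        by (rule sum_divide_distrib[symmetric])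
      then show ?thesis using cardU Np by (simp add: diff_divide_distrib)
    qed
    also have "\<dots> \<le> 1 - (\<Sum>l<L. c l - (\<delta> + 1 / real N))"
      using lowS by (intro diff_left_mono sum_mono) auto
    also have "\<dots> = real L * (\<delta> + 1 / real N)" using csum by (simp add: sum_subtractf)
    finally show ?thesis .
  qed
  have sumU: "0 \<le> (\<Sum>j\<in>U. D j) \<and> (\<Sum>j\<in>U. D j) \<le> real (card U) * C"
  proof
    show "0 \<le> (\<Sum>j\<in>U. D j)" using Db by (intro sum_nonneg) (auto simp: U_def)
    have "(\<Sum>j\<in>U. D j) \<le> (\<Sum>j\<in>U. C)" using Db by (intro sum_mono) (auto simp: U_def)
    then show "(\<Sum>j\<in>U. D j) \<le> real (card U) * C" by simp
  qed
  have "(\<Sum>j<N. D j / real N) - (\<Sum>l<L. c l * D\<xi> l)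
      = (\<Sum>l<L. (real (card (S l)) / real N - c l) * D\<xi> l) + (\<Sum>j\<in>U. D j) / real N"
  proof -
    have "(\<Sum>j<N. D j / real N) = (\<Sum>j<N. D j) / real N" by (rule sum_divide_distrib[symmetric])
    also have "\<dots> = (\<Sum>l<L. real (card (S l)) * D\<xi> l) / real N + (\<Sum>j\<in>U. D j) / real N"
      unfolding sumD by (rule add_divide_distrib)
    also have "(\<Sum>l<L. real (card (S l)) * D\<xi> l) / real N = (\<Sum>l<L. real (card (S l)) / real N * D\<xi> l)"
      unfolding sum_divide_distrib by simp
    finally have "(\<Sum>j<N. D j / real N) = (\<Sum>l<L. real (card (S l)) / real N * D\<xi> l) + (\<Sum>j\<in>U. D j) / real N" .
    moreover have "(\<Sum>l<L. real (card (S l)) / real N * D\<xi> l) - (\<Sum>l<L. c l * D\<xi> l)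
        = (\<Sum>l<L. (real (card (S l)) / real N - c l) * D\<xi> l)"
      by (simp add: sum_subtractf left_diff_distrib)
    ultimately show ?thesis by simp
  qed
  then have "\<bar>(\<Sum>j<N. D j / real N) - (\<Sum>l<L. c l * D\<xi> l)\<bar>
      \<le> \<bar>\<Sum>l<L. (real (card (S l)) / real N - c l) * D\<xi> l\<bar> + \<bar>(\<Sum>j\<in>U. D j) / real N\<bar>"
    by (simp only: abs_triangle_ineq)
  moreover have "\<bar>\<Sum>l<L. (real (card (S l)) / real N - c l) * D\<xi> l\<bar> \<le> (\<Sum>l<L. (\<delta> + 1 / real N) * C)"
  proof -
    have "\<bar>\<Sum>l<L. (real (card (S l)) / real N - c l) * D\<xi> l\<bar> \<le> (\<Sum>l<L. \<bar>(real (card (S l)) / real N - c l) * D\<xi> l\<bar>)"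
      by (rule sum_abs)
    also have "\<dots> \<le> (\<Sum>l<L. (\<delta> + 1 / real N) * C)"
    proof (intro sum_mono)
      fix l assume "l \<in> {..<L}"
      then have l: "l < L" by simp
      show "\<bar>(real (card (S l)) / real N - c l) * D\<xi> l\<bar> \<le> (\<delta> + 1 / real N) * C"
        unfolding abs_mult using cardS[OF l] D\<xi>b[OF l] by (intro mult_mono) auto
    qed
    finally show ?thesis .
  qed
  moreover have "\<bar>(\<Sum>j\<in>U. D j) / real N\<bar> \<le> real L * (\<delta> + 1 / real N) * C"
  proof -
    have "\<bar>(\<Sum>j\<in>U. D j) / real N\<bar> = (\<Sum>j\<in>U. D j) / real N" using sumU Np by simp
    also have "\<dots> \<le> real (card U) * C / real N" using sumU Np by (intro divide_right_mono) auto
    also have "\<dots> = real (card U) / real N * C" by simp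
    also have "\<dots> \<le> real L * (\<delta> + 1 / real N) * C" using cardU2 C0 by (intro mult_right_mono)
    finally show ?thesis .
  qed
  ultimately have "\<bar>(\<Sum>j<N. D j / real N) - (\<Sum>l<L. c l * D\<xi> l)\<bar>
     \<le> (\<Sum>l<L. (\<delta> + 1 / real N) * C) + real L * (\<delta> + 1 / real N) * C" by linarith
  then show ?thesis by (simp add: algebra_simps)
qed


definition clamp01 :: "real \<Rightarrow> real" where "clamp01 t = max 0 (min 1 t)"
definition hat :: "real \<Rightarrow> real" where "hat t = max 0 (1 - \<bar>t\<bar>)"
definition Qf :: "nat \<Rightarrow> real \<Rightarrow> (nat \<Rightarrow> real) \<Rightarrow> real \<Rightarrow> real" where
  "Qf L \<delta> cum s = (\<Sum>i\<in>{1..<L}. clamp01 ((s - cum i) / \<delta>))"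
definition gam :: "nat \<Rightarrow> (nat \<Rightarrow> real^'m) \<Rightarrow> real \<Rightarrow> real^'m" where
  "gam L \<xi> u = (1 / (\<Sum>l<L. hat (u - real l))) *\<^sub>R (\<Sum>l<L. hat (u - real l) *\<^sub>R \<xi> l)"

lemma Qf_range: "0 \<le> Qf L \<delta> cum s \<and> Qf L \<delta> cum s \<le> real L - 1" if "L \<ge> 1"
proof
  show "0 \<le> Qf L \<delta> cum s" unfolding Qf_def clamp01_def by (intro sum_nonneg) auto
  have "Qf L \<delta> cum s \<le> (\<Sum>i\<in>{1..<L}. 1)" unfolding Qf_def clamp01_def by (intro sum_mono) auto
  also have "\<dots> = real L - 1" using that by simp
  finally show "Qf L \<delta> cum s \<le> real L - 1" .
qed

lemma hat_sum_pos:
  assumes "0 \<le> u" "u \<le> real L - 1"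
  shows "(\<Sum>l<L. hat (u - real l)) > 0"
proof -
  define l0 where "l0 = nat \<lfloor>u\<rfloor>"
  have fl: "real l0 = of_int \<lfloor>u\<rfloor>" using assms unfolding l0_def by simp
  have "real l0 \<le> u" "u < real l0 + 1" unfolding fl by linarith+
  then have h: "hat (u - real l0) > 0" by (simp add: hat_def)
  have "real l0 \<le> real L - 1" using \<open>real l0 \<le> u\<close> assms by linarith
  then have l0L: "l0 < L" by linarith
  have "hat (u - real l0) \<le> (\<Sum>l<L. hat (u - real l))"
    using l0L by (intro member_le_sum) (auto simp: hat_def)
  then show ?thesis using h by linarith
qed

lemma gam_Dm0:
  fixes \<xi> :: "nat \<Rightarrow> real^'m"
  assumes \<xi>: "\<And>l. l < L \<Longrightarrow> \<xi> l \<in> Dm0" and u: "0 \<le> u" "u \<le> real L - 1"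
  shows "gam L \<xi> u \<in> Dm0"
proof -
  define H where "H = (\<Sum>l<L. hat (u - real l))"
  have H: "H > 0" unfolding H_def by (rule hat_sum_pos[OF u])
  have hn: "hat t \<ge> 0" for t by (simp add: hat_def)
  define l0 where "l0 = nat \<lfloor>u\<rfloor>"
  have fl: "real l0 = of_int \<lfloor>u\<rfloor>" using u unfolding l0_def by simp
  have "real l0 \<le> u" "u < real l0 + 1" unfolding fl by linarith+
  then have h0: "hat (u - real l0) > 0" by (simp add: hat_def)
  have "real l0 \<le> real L - 1" using \<open>real l0 \<le> u\<close> u by linarith
  then have l0L: "l0 < L" by linarith
  have comp: "gam L \<xi> u $ i = (\<Sum>l<L. hat (u - real l) * \<xi> l $ i) / H" for i
    unfolding gam_def H_def[symmetric] by (simp add: sum_component)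
  have pos: "gam L \<xi> u $ i > 0" for i
  proof -
    have "hat (u - real l0) * \<xi> l0 $ i \<le> (\<Sum>l<L. hat (u - real l) * \<xi> l $ i)"
      using l0L \<xi> hn by (intro member_le_sum) (auto simp: Dm0_def Dm_def intro!: mult_nonneg_nonneg)
    moreover have "hat (u - real l0) * \<xi> l0 $ i > 0" using h0 \<xi>[OF l0L] by (simp add: Dm0_def)
    ultimately show ?thesis unfolding comp using H by simp
  qed
  have "(\<Sum>i\<in>UNIV. gam L \<xi> u $ i) = (\<Sum>l<L. hat (u - real l) * (\<Sum>i\<in>UNIV. \<xi> l $ i)) / H"
    unfolding comp by (simp add: sum_divide_distrib[symmetric] sum_distrib_left sum.swap[of _ UNIV])
  also have "\<dots> \<le> (\<Sum>l<L. hat (u - real l) * 1) / H"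
    using H \<xi> hn by (intro divide_right_mono sum_mono mult_left_mono) (auto simp: Dm0_def Dm_def)
  also have "\<dots> = 1" using H by (simp add: H_def)
  finally have "(\<Sum>i\<in>UNIV. gam L \<xi> u $ i) \<le> 1" .
  then show ?thesis using pos unfolding Dm0_def Dm_iff by (auto intro: less_imp_le)
qed

lemma gam_int:
  assumes "l < L"
  shows "gam L \<xi> (real l) = \<xi> l"
proof -
  have h: "hat (real l - real l') = (if l' = l then 1 else 0)" for l'
  proof (cases "l' = l")
    case False
    then have "\<bar>real l - real l'\<bar> \<ge> 1" by linarith
    then show ?thesis using False by (simp add: hat_def)
  qed (simp add: hat_def)
  have s1: "(\<Sum>l'<L. hat (real l - real l') *\<^sub>R \<xi> l') = (\<Sum>l'<L. if l' = l then \<xi> l' else 0)"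
    by (intro sum.cong refl) (simp add: h)
  have s2: "(\<Sum>l'<L. hat (real l - real l')) = (\<Sum>l'<L. if l' = l then 1 else 0)"
    by (intro sum.cong refl) (simp add: h)
  show ?thesis unfolding gam_def s1 s2 using assms by (simp add: sum.delta')
qed

lemma Qf_settled:
  assumes \<delta>: "\<delta> > 0" and mono: "\<And>i i'. i \<le> i' \<Longrightarrow> i' \<le> L \<Longrightarrow> cum i \<le> cum i'"
    and l: "l < L" and s1: "cum l + \<delta> \<le> s" and s2: "s \<le> cum (Suc l)"
  shows "Qf L \<delta> cum s = real l"
proof -
  have "Qf L \<delta> cum s = (\<Sum>i\<in>{1..<L}. if i \<le> l then 1 else 0)"
    unfolding Qf_def
  proof (intro sum.cong refl)
    fix i assume i: "i \<in> {1..<L}"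
    show "clamp01 ((s - cum i) / \<delta>) = (if i \<le> l then 1 else 0)"
    proof (cases "i \<le> l")
      case True
      then have "cum i \<le> cum l" using mono l by simp
      then have "(s - cum i) / \<delta> \<ge> 1" using s1 \<delta> by (simp add: le_divide_eq)
      then show ?thesis using True by (simp add: clamp01_def)
    next
      case False
      then have "cum (Suc l) \<le> cum i" using mono i by simp
      then have "(s - cum i) / \<delta> \<le> 0" using s2 \<delta> by (simp add: divide_le_0_iff)
      then show ?thesis using False by (simp add: clamp01_def)
    qed
  qed
  also have "\<dots> = (\<Sum>i\<in>{i\<in>{1..<L}. i \<le> l}. 1)" by (rule sum.inter_filter[symmetric]) simp
  also have "{i\<in>{1..<L}. i \<le> l} = {1..l}" using l by auto
  finally show ?thesis by simp
qed

lemma gQ_cont: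
  fixes \<xi> :: "nat \<Rightarrow> real^'m" and cum :: "nat \<Rightarrow> 'x::topological_space \<Rightarrow> real"
  assumes L: "L \<ge> 1" and cc: "\<And>i. continuous_on X (cum i)" and \<delta>: "\<delta> \<noteq> 0"
  shows "continuous_on X (\<lambda>x. gam L \<xi> (Qf L \<delta> (\<lambda>i. cum i x) s))"
proof -
  have cQ: "continuous_on X (\<lambda>x. Qf L \<delta> (\<lambda>i. cum i x) s)"
    unfolding Qf_def clamp01_def by (intro continuous_intros cc) (use \<delta> in auto)
  have cg: "continuous_on {0..real L - 1} (gam L \<xi>)"
    unfolding gam_def hat_def
  proof -
    have nz: "(\<Sum>l<L. max 0 (1 - \<bar>u - real l\<bar>)) \<noteq> 0" if "u \<in> {0..real L - 1}" for u
    proof -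
      have "(\<Sum>l<L. hat (u - real l)) > 0" using that by (intro hat_sum_pos) auto
      then show ?thesis by (simp add: hat_def)
    qed
    show "continuous_on {0..real L - 1} (\<lambda>u. (1 / (\<Sum>l<L. max 0 (1 - \<bar>u - real l\<bar>))) *\<^sub>R (\<Sum>l<L. max 0 (1 - \<bar>u - real l\<bar>) *\<^sub>R \<xi> l))"
      by (intro continuous_intros) (use nz in auto)
  qed
  show ?thesis
    by (rule continuous_on_compose2[OF cg cQ]) (use Qf_range[OF L] in auto)
qed


lemma caseB_generic:
  fixes M :: "'a measure" and X :: "'x::metric_space set" and q :: "'x \<Rightarrow> real^'m \<Rightarrow> real"
    and kf :: "'a \<Rightarrow> nat" and vw :: "nat \<Rightarrow> 'a \<Rightarrow> real" and \<Theta>f :: "nat \<Rightarrow> 'a \<Rightarrow> 'x \<Rightarrow> real^'m"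
  assumes M: "prob_space M" and X: "compact X" and q: "q \<in> Dtilde X" and \<epsilon>: "\<epsilon> > 0"
    and ind: "indep_ingredients M (nat_sigma M kf) Fw Fa"
    and kpos: "cond_iii M kf"
    and Vr: "\<And>\<omega> j. \<omega> \<in> space M \<Longrightarrow> 0 \<le> vw j \<omega> \<and> vw j \<omega> \<le> 1"
    and Tr: "\<And>\<omega> j x. \<omega> \<in> space M \<Longrightarrow> x \<in> X \<Longrightarrow> \<Theta>f j \<omega> x \<in> Dm0"
    and Wa: "\<And>j w e. w \<in> {0..1} \<Longrightarrow> e > 0 \<Longrightarrow>
              \<exists>E\<in>Fw j. measure M E > 0 \<and> E \<subseteq> {\<omega>\<in>space M. \<bar>vw j \<omega> - w\<bar> < e}"
    and Aa: "\<And>j g r. continuous_on X g \<Longrightarrow> g ` X \<subseteq> Dm0 \<Longrightarrow> r > 0 \<Longrightarrow>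
              \<exists>E\<in>Fa j. measure M E > 0 \<and> E \<subseteq> {\<omega>\<in>space M. \<forall>x\<in>X. dist (\<Theta>f j \<omega> x) (g x) < r}"
  shows "pos_prob_in M (sets M) {\<omega>\<in>space M. Linf_dist X (mix_dens (kf \<omega>) (\<lambda>j x. vw j \<omega>) (\<lambda>j x. \<Theta>f j \<omega> x)) q < ereal \<epsilon>}"
proof -
  have \<epsilon>4: "\<epsilon> / 4 > 0" using \<epsilon> by simp
  from key[OF q X \<epsilon>4] obtain k0 L \<xi> c r C where k0: "k0 \<ge> 1" and L1: "(L::nat) \<ge> 1" and r: "r > 0"
    and \<xi>D: "\<forall>l<L. \<xi> l \<in> Dm0"
    and near: "\<forall>l<L. \<forall>\<theta>. dist \<theta> (\<xi> l) < r \<longrightarrow> bern_dens k0 \<theta> = bern_dens k0 (\<xi> l)"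
    and bound: "\<forall>\<theta>\<in>(Dm0::(real^'m) set). \<forall>y\<in>Dm. 0 \<le> bern_dens k0 \<theta> y \<and> bern_dens k0 \<theta> y \<le> C"
    and cc: "\<forall>l<L. continuous_on X (c l) \<and> (\<forall>x\<in>X. c l x > 0)"
    and cs: "\<forall>x\<in>X. (\<Sum>l<L. c l x) = 1"
    and ce: "\<forall>x\<in>X. \<forall>y\<in>Dm. \<bar>(\<Sum>l<L. c l x * bern_dens k0 (\<xi> l) y) - q x y\<bar> < \<epsilon> / 4"
    by (elim exE conjE) (rule that; assumption)
  have C0: "C \<ge> 0"
  proof -
    have z: "(0::real^'m) \<in> Dm" by (simp add: Dm_def)
    have x0: "\<xi> 0 \<in> Dm0" using \<xi>D L1 by auto
    have "0 \<le> bern_dens k0 (\<xi> 0) 0 \<and> bern_dens k0 (\<xi> 0) 0 \<le> C"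
      using bound x0 z by blast
    then show ?thesis by linarith
  qed
  define t0 where "t0 = \<epsilon> / (16 * (C + 1))"
  define t where "t = t0 / real L"
  have t: "t > 0" using \<epsilon> L1 C0 unfolding t_def t0_def by (intro divide_pos_pos mult_pos_pos) auto
  have Lt: "real L * t = t0" using L1 unfolding t_def by simp
  obtain N0 :: nat where N0: "1 / t < real N0" using reals_Archimedean2 by blast
  define N where "N = Suc N0"
  have N1: "N \<ge> 1" by (simp add: N_def)
  have Np: "real N > 0" by (simp add: N_def)
  have Nt: "1 / real N \<le> t"
  proof -
    have "1 / t < real N" using N0 by (simp add: N_def)
    then have "1 < real N * t" using t by (simp add: divide_less_eq mult.commute)
    then show ?thesis using Np by (simp add: divide_le_eq mult.commute)
  qed
  define \<delta> where "\<delta> = t"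
  have errD: "2 * real L * (\<delta> + 1 / real N) * C \<le> \<epsilon> / 4"
  proof -
    have "2 * real L * (\<delta> + 1 / real N) * C \<le> 2 * real L * (2 * t) * C"
      using Nt C0 L1 by (intro mult_right_mono mult_left_mono) (auto simp: \<delta>_def)
    also have "\<dots> = 4 * (real L * t) * C" by (simp add: algebra_simps)
    also have "\<dots> = \<epsilon> / 4 * (C / (C + 1))"
      unfolding Lt t0_def using C0 by (simp add: field_simps)
    also have "\<dots> \<le> \<epsilon> / 4 * 1" using \<epsilon> C0 by (intro mult_left_mono) (auto simp: divide_le_eq_1)
    finally show ?thesis by simp
  qed
  define P where "P = real N * real N + real N"
  have Pp: "P > 0" unfolding P_def using Np by (intro add_pos_pos mult_pos_pos) auto
  define \<eta>0 where "\<eta>0 = \<epsilon> / (4 * (C + 1)) / P"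
  have \<eta>0: "\<eta>0 > 0" using \<epsilon> Pp C0 unfolding \<eta>0_def by (intro divide_pos_pos) auto
  have errW: "(real N * real N * \<eta>0 + real N * \<eta>0) * C \<le> \<epsilon> / 4"
  proof -
    have e1: "(real N * real N * \<eta>0 + real N * \<eta>0) = P * \<eta>0" by (simp add: algebra_simps P_def)
    have e2: "P * \<eta>0 = \<epsilon> / (4 * (C + 1))" using Pp unfolding \<eta>0_def by simp
    have "(real N * real N * \<eta>0 + real N * \<eta>0) * C = \<epsilon> / 4 * (C / (C + 1))"
      unfolding e1 e2 using C0 by (simp add: field_simps)
    also have "\<dots> \<le> \<epsilon> / 4 * 1" using \<epsilon> C0 by (intro mult_left_mono) (auto simp: divide_le_eq_1)
    finally show ?thesis by simp
  qed
  define Ws where "Ws = inv_stick N (\<lambda>_. 1 / real N)"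
  have wsum: "(\<Sum>l<N. 1 / real N) = 1" using Np by simp
  note wp = inv_stick_props[of N "\<lambda>_. 1 / real N", OF _ wsum, folded Ws_def]
  have Ws01: "0 \<le> Ws l \<and> Ws l \<le> 1" for l using wp(1) Np by simp
  have Wstick: "stick Ws j = 1 / real N" if "j < N" for j using wp(2) Np that by simp
  have W0: "(\<Prod>l<N. 1 - Ws l) = 0" using wp(3) Np by simp
  define cum where "cum = (\<lambda>i x. \<Sum>i'<min i L. c i' x)"
  have cum_cont: "continuous_on X (cum i)" for i
    unfolding cum_def by (intro continuous_on_sum) (use cc in auto)
  define sp where "sp = (\<lambda>j::nat. (real j + 1/2) / real N)"
  define gj where "gj = (\<lambda>j x. gam L \<xi> (Qf L \<delta> (\<lambda>i. cum i x) (sp j)))"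
  have gj_cont: "continuous_on X (gj j)" for j
    unfolding gj_def by (rule gQ_cont[OF L1 cum_cont]) (use t in \<open>simp add: \<delta>_def\<close>)
  have gj_D: "gj j ` X \<subseteq> Dm0" for j
  proof
    fix u assume "u \<in> gj j ` X"
    then obtain x where u: "u = gj j x" by auto
    show "u \<in> Dm0" unfolding u gj_def
      by (rule gam_Dm0) (use \<xi>D Qf_range[OF L1] in auto)
  qed
  have exW: "\<forall>j. \<exists>E. E \<in> Fw j \<and> measure M E > 0 \<and> E \<subseteq> {\<omega>\<in>space M. \<bar>vw j \<omega> - Ws j\<bar> < \<eta>0}"
  proof
    fix j
    have "Ws j \<in> {0..1}" using Ws01 by simp
    from Wa[OF this \<eta>0]
    show "\<exists>E. E \<in> Fw j \<and> measure M E > 0 \<and> E \<subseteq> {\<omega>\<in>space M. \<bar>vw j \<omega> - Ws j\<bar> < \<eta>0}"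
      by (simp only: Bex_def)
  qed
  obtain EW where EW: "\<forall>j. EW j \<in> Fw j \<and> measure M (EW j) > 0 \<and> EW j \<subseteq> {\<omega>\<in>space M. \<bar>vw j \<omega> - Ws j\<bar> < \<eta>0}"
    using choice[OF exW] by (elim exE) (erule that)
  have exA: "\<forall>j. \<exists>E. E \<in> Fa j \<and> measure M E > 0 \<and> E \<subseteq> {\<omega>\<in>space M. \<forall>x\<in>X. dist (\<Theta>f j \<omega> x) (gj j x) < r}"
  proof
    fix j
    from Aa[OF gj_cont gj_D r]
    show "\<exists>E. E \<in> Fa j \<and> measure M E > 0 \<and> E \<subseteq> {\<omega>\<in>space M. \<forall>x\<in>X. dist (\<Theta>f j \<omega> x) (gj j x) < r}"
      by (simp only: Bex_def)
  qed
  obtain EA where EA: "\<forall>j. EA j \<in> Fa j \<and> measure M (EA j) > 0 \<and> EA j \<subseteq> {\<omega>\<in>space M. \<forall>x\<in>X. dist (\<Theta>f j \<omega> x) (gj j x) < r}"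
    using choice[OF exA] by (elim exE) (erule that)
  define EK where "EK = {\<omega>\<in>space M. kf \<omega> = k0}"
  have EK: "EK \<in> nat_sigma M kf" "measure M EK > 0" using EK_event[OF k0 kpos] by (simp_all add: EK_def)
  define A where "A = EK \<inter> (\<Inter>j<N. EW j) \<inter> (\<Inter>j<N. EA j)"
  have A: "A \<in> sets M \<and> measure M A > 0"
    unfolding A_def by (rule indep_pos[OF M ind EK]) (use EW EA in auto)
  have sub: "A \<subseteq> {\<omega>\<in>space M. Linf_dist X (mix_dens (kf \<omega>) (\<lambda>j x. vw j \<omega>) (\<lambda>j x. \<Theta>f j \<omega> x)) q < ereal \<epsilon>}"
  proof
    fix \<omega> assume \<omega>: "\<omega> \<in> A"
    then have sp\<omega>: "\<omega> \<in> space M" and kw: "kf \<omega> = k0" by (auto simp: A_def EK_def)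
    have wc: "\<bar>vw j \<omega> - Ws j\<bar> < \<eta>0" if "j < N" for j
      using \<omega> spec[OF EW, of j] that by (auto simp: A_def)
    have ac: "dist (\<Theta>f j \<omega> x) (gj j x) < r" if "j < N" "x \<in> X" for j x
      using \<omega> spec[OF EA, of j] that by (auto simp: A_def)
    have pw: "\<bar>mix_dens (kf \<omega>) (\<lambda>j x. vw j \<omega>) (\<lambda>j x. \<Theta>f j \<omega> x) x y - q x y\<bar> \<le> 3 * \<epsilon> / 4"
      if x: "x \<in> X" and y: "y \<in> Dm" for x y
    proof -
      define D where "D = (\<lambda>j. bern_dens k0 (\<Theta>f j \<omega> x) y)"
      have Db: "0 \<le> D j \<and> D j \<le> C" for j using bound Tr[OF sp\<omega> x] y unfolding D_def by blast
      have d1: "\<bar>(\<Sum>j. stick (\<lambda>l. vw l \<omega>) j * D j) - (\<Sum>j<N. stick Ws j * D j)\<bar>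
          \<le> (real N * real N * \<eta>0 + real N * \<eta>0) * C"
        by (rule mix_bound[OF _ Ws01 W0 _ Db]) (use Vr[OF sp\<omega>] wc in \<open>auto intro: less_imp_le\<close>)
      have e1: "(\<Sum>j<N. stick Ws j * D j) = (\<Sum>j<N. D j / real N)"
        by (intro sum.cong refl) (simp add: Wstick)
      have d2: "\<bar>(\<Sum>j<N. D j / real N) - (\<Sum>l<L. c l x * bern_dens k0 (\<xi> l) y)\<bar> \<le> 2 * real L * (\<delta> + 1 / real N) * C"
      proof (rule disc_bound[OF L1 N1])
        show "\<delta> > 0" using t by (simp add: \<delta>_def)
        show "c l x > 0" if "l < L" for l using cc that x by blast
        show "(\<Sum>l<L. c l x) = 1" using cs x by blast
        show "0 \<le> bern_dens k0 (\<xi> l) y \<and> bern_dens k0 (\<xi> l) y \<le> C" if "l < L" for l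
          using bound \<xi>D that y by blast
        show "0 \<le> D j \<and> D j \<le> C" for j by (rule Db)
        fix j l assume j: "j < N" and l: "l < L"
          and s1: "(\<Sum>i<l. c i x) + \<delta> \<le> (real j + 1/2) / real N"
          and s2: "(real j + 1/2) / real N \<le> (\<Sum>i<Suc l. c i x)"
        have "Qf L \<delta> (\<lambda>i. cum i x) (sp j) = real l"
        proof (rule Qf_settled)
          show "\<delta> > 0" using t by (simp add: \<delta>_def)
          show "cum i x \<le> cum i' x" if "i \<le> i'" "i' \<le> L" for i i'
            unfolding cum_def using that cc x by (intro sum_mono2) (auto intro: less_imp_le)
          show "l < L" by (rule l)
          show "cum l x + \<delta> \<le> sp j" using s1 l by (simp add: cum_def sp_def min_def)
          show "sp j \<le> cum (Suc l) x" using s2 l by (simp add: cum_def sp_def min_def)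
        qed
        then have "gj j x = \<xi> l" by (simp add: gj_def gam_int[OF l])
        then have "dist (\<Theta>f j \<omega> x) (\<xi> l) < r" using ac[OF j x] by simp
        then show "D j = bern_dens k0 (\<xi> l) y" unfolding D_def using near l by simp
      qed
      have d3: "\<bar>(\<Sum>l<L. c l x * bern_dens k0 (\<xi> l) y) - q x y\<bar> < \<epsilon> / 4" using ce x y by blast
      have "mix_dens (kf \<omega>) (\<lambda>j x. vw j \<omega>) (\<lambda>j x. \<Theta>f j \<omega> x) x y = (\<Sum>j. stick (\<lambda>l. vw l \<omega>) j * D j)"
        by (simp add: mix_dens_def kw D_def)
      then show ?thesis using d1 d2 d3 errW errD unfolding e1 by linarith
    qed
    have "Linf_dist X (mix_dens (kf \<omega>) (\<lambda>j x. vw j \<omega>) (\<lambda>j x. \<Theta>f j \<omega> x)) q \<le> ereal (3 * \<epsilon> / 4)"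
      by (rule Linf_dist_le) (rule pw)
    also have "\<dots> < ereal \<epsilon>" using \<epsilon> by simp
    finally show "\<omega> \<in> {\<omega>\<in>space M. Linf_dist X (mix_dens (kf \<omega>) (\<lambda>j x. vw j \<omega>) (\<lambda>j x. \<Theta>f j \<omega> x)) q < ereal \<epsilon>}"
      using sp\<omega> by simp
  qed
  show ?thesis unfolding pos_prob_in_def using A sub by blast
qed


lemma w_case:
  fixes M :: "'a measure" and X :: "'x::metric_space set" and q :: "'x \<Rightarrow> real^'m \<Rightarrow> real"
    and k :: "'a \<Rightarrow> nat" and vw :: "nat \<Rightarrow> 'a \<Rightarrow> real" and z :: "nat \<Rightarrow> 'a \<Rightarrow> 'x \<Rightarrow> real^'m"
    and h :: "'x \<Rightarrow> real^'m \<Rightarrow> real^'m"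
  assumes M: "prob_space M" and X: "compact X" and q: "q \<in> Dtilde X"
    and vr: "iid_rvs M {0..1} vw" and hf: "H_family X h"
    and ind: "indep_ingredients M (nat_sigma M k) (\<lambda>j. rv_sigma M (vw j)) (\<lambda>j. proc_sigma M X (z j))"
    and ci: "cond_i M X z h" and ciii: "cond_iii M k" and fs: "\<forall>j. full_support M {0..1} (vw j)"
  shows "in_Linf_support M X (\<lambda>\<omega>. mix_dens (k \<omega>) (\<lambda>j x. vw j \<omega>) (\<lambda>j x. h x (z j \<omega> x))) q"
  unfolding in_Linf_support_def
proof (intro allI impI)
  fix \<epsilon> :: real assume \<epsilon>: "\<epsilon> > 0"
  show "pos_prob_in M (sets M) {\<omega>\<in>space M. Linf_dist X (mix_dens (k \<omega>) (\<lambda>j x. vw j \<omega>) (\<lambda>j x. h x (z j \<omega> x))) q < ereal \<epsilon>}"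
  proof (rule caseB_generic[OF M X q \<epsilon> ind ciii, where \<Theta>f="\<lambda>j \<omega> x. h x (z j \<omega> x)"])
    fix \<omega> j assume "\<omega> \<in> space M"
    then have "vw j \<omega> \<in> {0..1}" using vr by (auto simp: iid_rvs_def)
    then show "0 \<le> vw j \<omega> \<and> vw j \<omega> \<le> 1" by simp
  next
    fix \<omega> j x
    show "h x (z j \<omega> x) \<in> Dm0" using hf rangeI unfolding H_family_def by blast
  next
    fix j and w e :: real assume w: "w \<in> {0..1}" and e: "e > 0"
    define E where "E = {\<omega>\<in>space M. vw j \<omega> \<in> ball w e}"
    have "vw j -` ball w e \<inter> space M \<in> sets (vimage_algebra (space M) (vw j) borel)"
      by (rule in_vimage_algebra) simp
    moreover have "vw j -` ball w e \<inter> space M = E" by (auto simp: E_def)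
    ultimately have E1: "E \<in> rv_sigma M (vw j)" by (simp add: rv_sigma_def)
    have "ball w e \<inter> {0..1} \<noteq> {}" using w e centre_in_ball[of w e] by blast
    then have E2: "measure M E > 0" using fs unfolding full_support_def E_def by blast
    have E3: "E \<subseteq> {\<omega>\<in>space M. \<bar>vw j \<omega> - w\<bar> < e}" by (auto simp: E_def dist_real_def abs_minus_commute)
    show "\<exists>E\<in>rv_sigma M (vw j). measure M E > 0 \<and> E \<subseteq> {\<omega>\<in>space M. \<bar>vw j \<omega> - w\<bar> < e}"
      using E1 E2 E3 by blast
  next
    fix j and g :: "'x \<Rightarrow> real^'m" and r :: real assume g: "continuous_on X g" "g ` X \<subseteq> Dm0" and r: "r > 0"
    have pp: "pos_prob_in M (proc_sigma M X (z j)) {\<omega>\<in>space M. (SUP x\<in>X. ereal (norm (h x (z j \<omega> x) - g x))) < ereal r}"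
      using ci r g unfolding cond_i_def by blast
    have "{\<omega>\<in>space M. (SUP x\<in>X. ereal (norm (h x (z j \<omega> x) - g x))) < ereal r} \<subseteq> {\<omega>\<in>space M. \<forall>x\<in>X. dist (h x (z j \<omega> x)) (g x) < r}"
    proof (intro subsetI)
      fix \<omega> assume "\<omega> \<in> {\<omega>\<in>space M. (SUP x\<in>X. ereal (norm (h x (z j \<omega> x) - g x))) < ereal r}"
      then show "\<omega> \<in> {\<omega>\<in>space M. \<forall>x\<in>X. dist (h x (z j \<omega> x)) (g x) < r}"
        using SUP_lt_pointwise[where F="\<lambda>x. norm (h x (z j \<omega> x) - g x)"] by (auto simp: dist_norm)
    qed
    from pos_prob_sub[OF pp this]
    show "\<exists>E\<in>proc_sigma M X (z j). measure M E > 0 \<and> E \<subseteq> {\<omega>\<in>space M. \<forall>x\<in>X. dist (h x (z j \<omega> x)) (g x) < r}" .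
  qed
qed

theorem theorem3:
  fixes M :: "'a measure" and X :: "(real^'p) set"
    and k :: "'a \<Rightarrow> nat"
    and \<eta> :: "nat \<Rightarrow> 'a \<Rightarrow> real^'p \<Rightarrow> real"
    and z :: "nat \<Rightarrow> 'a \<Rightarrow> real^'p \<Rightarrow> real^'m"
    and v :: "real^'p \<Rightarrow> real \<Rightarrow> real"
    and h :: "real^'p \<Rightarrow> real^'m \<Rightarrow> real^'m"
    and vw :: "nat \<Rightarrow> 'a \<Rightarrow> real"
    and \<theta> :: "nat \<Rightarrow> 'a \<Rightarrow> real^'m"
  assumes "prob_space M" and "compact X"
  shows
   \<comment> \<open>DMBPP(lambda, Psi_eta, Psi_z, V, H)\<close>
   "(nat_rv M k \<and> iid_procs M X \<eta> \<and> iid_procs M X z \<and> V_family X v \<and> H_family X h \<and>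
     indep_ingredients M (nat_sigma M k) (\<lambda>j. proc_sigma M X (\<eta> j)) (\<lambda>j. proc_sigma M X (z j)) \<and>
     cond_i M X z h \<and> cond_ii M X \<eta> v \<and> cond_iii M k
     \<longrightarrow> (\<forall>q\<in>Dtilde X. in_Linf_support M X
            (\<lambda>\<omega>. mix_dens (k \<omega>) (\<lambda>j x. v x (\<eta> j \<omega> x)) (\<lambda>j x. h x (z j \<omega> x))) q))
    \<and>
   \<comment> \<open>theta-DMBPP(lambda, Psi_eta, V, Psi_theta)\<close>
    (nat_rv M k \<and> iid_procs M X \<eta> \<and> iid_rvs M Dm0 \<theta> \<and> V_family X v \<and>
     indep_ingredients M (nat_sigma M k) (\<lambda>j. proc_sigma M X (\<eta> j)) (\<lambda>j. rv_sigma M (\<theta> j)) \<and>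
     cond_ii M X \<eta> v \<and> cond_iii M k \<and> (\<forall>j. full_support M Dm0 (\<theta> j))
     \<longrightarrow> (\<forall>q\<in>Dtilde X. in_Linf_support M X
            (\<lambda>\<omega>. mix_dens (k \<omega>) (\<lambda>j x. v x (\<eta> j \<omega> x)) (\<lambda>j x. \<theta> j \<omega>)) q))
    \<and>
   \<comment> \<open>w-DMBPP(lambda, Psi_v, Psi_z, H)\<close>
    (nat_rv M k \<and> iid_rvs M {0..1} vw \<and> iid_procs M X z \<and> H_family X h \<and>
     indep_ingredients M (nat_sigma M k) (\<lambda>j. rv_sigma M (vw j)) (\<lambda>j. proc_sigma M X (z j)) \<and>
     cond_i M X z h \<and> cond_iii M k \<and> (\<forall>j. full_support M {0..1} (vw j))
     \<longrightarrow> (\<forall>q\<in>Dtilde X. in_Linf_support M X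
            (\<lambda>\<omega>. mix_dens (k \<omega>) (\<lambda>j x. vw j \<omega>) (\<lambda>j x. h x (z j \<omega> x))) q))"
proof (intro conjI impI ballI)
  fix q :: "real^'p \<Rightarrow> real^'m \<Rightarrow> real" assume "q \<in> Dtilde X" and H: "nat_rv M k \<and> iid_procs M X \<eta> \<and> iid_procs M X z \<and> V_family X v \<and> H_family X h \<and>
     indep_ingredients M (nat_sigma M k) (\<lambda>j. proc_sigma M X (\<eta> j)) (\<lambda>j. proc_sigma M X (z j)) \<and>
     cond_i M X z h \<and> cond_ii M X \<eta> v \<and> cond_iii M k"
  then show "in_Linf_support M X (\<lambda>\<omega>. mix_dens (k \<omega>) (\<lambda>j x. v x (\<eta> j \<omega> x)) (\<lambda>j x. h x (z j \<omega> x))) q"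
    using assms by (intro dmbpp_case) auto
next
  fix q :: "real^'p \<Rightarrow> real^'m \<Rightarrow> real" assume "q \<in> Dtilde X" and H: "nat_rv M k \<and> iid_procs M X \<eta> \<and> iid_rvs M Dm0 \<theta> \<and> V_family X v \<and>
     indep_ingredients M (nat_sigma M k) (\<lambda>j. proc_sigma M X (\<eta> j)) (\<lambda>j. rv_sigma M (\<theta> j)) \<and>
     cond_ii M X \<eta> v \<and> cond_iii M k \<and> (\<forall>j. full_support M Dm0 (\<theta> j))"
  then show "in_Linf_support M X (\<lambda>\<omega>. mix_dens (k \<omega>) (\<lambda>j x. v x (\<eta> j \<omega> x)) (\<lambda>j x. \<theta> j \<omega>)) q"
    using assms by (intro theta_case) auto
next
  fix q :: "real^'p \<Rightarrow> real^'m \<Rightarrow> real" assume "q \<in> Dtilde X" and H: "nat_rv M k \<and> iid_rvs M {0..1} vw \<and> iid_procs M X z \<and> H_family X h \<and>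
     indep_ingredients M (nat_sigma M k) (\<lambda>j. rv_sigma M (vw j)) (\<lambda>j. proc_sigma M X (z j)) \<and>
     cond_i M X z h \<and> cond_iii M k \<and> (\<forall>j. full_support M {0..1} (vw j))"
  then show "in_Linf_support M X (\<lambda>\<omega>. mix_dens (k \<omega>) (\<lambda>j x. vw j \<omega>) (\<lambda>j x. h x (z j \<omega> x))) q"
    using assms by (intro w_case) auto
qed


end
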